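(* Let $H$ be a graph on $[n]$ and assume that ${\bf d}$ is a degree sequence satisfying $J({\bf d})=o(M-2e(H))$. Then \[ {\mathbb P}(H\subseteq {\mathcal G}(n,{\bf d})) \le \prod_{i=1}^n (d_i)_{d_i^{H}} \prod_{i=1}^{e(H)}\frac{1+o(1)}{M-2i+2}. \] If further we have $\Delta^2_{\partial(H)}=o(M-2e(H))$, then \[ {\mathbb P}(H\subseteq {\mathcal G}(n,{\bf d})) = \prod_{i=1}^n (d_i)_{d_i^{H}} \prod_{i=1}^{e(H)}\frac{1+o(1)}{M-2i+2}, \] i.e.\ the upper bound holds with equality (up to the $1+o(1)$ factors).
   Context: ${\bf d}=(d_1,\ldots,d_n)$ is a graphical degree sequence with $d_1\ge d_2\ge\cdots\ge d_n$, and ${\mathcal G}(n,{\bf d})$ is a uniformly random graph on vertex set $[n]$ in which vertex $i$ has degree $d_i$. $\Delta=d_1$, $M=\sum_{i=1}^n d_i$, $J({\bf d})=\sum_{i=1}^{\Delta} d_i$. For a graph $H$ on $[n]$, $e(H)$ is its number of edges, ${\bf d}^H=(d^H_1,\ldots,d^H_n)$ is its degree sequence, and $\partial(H)$ is the set of vertices incident to some edge of $H$. For $S\subseteq[n]$, $\Delta_S=\max_{i\in S} d_i$. $(x)_k$ denotes the falling factorial $x(x-1)\cdots(x-k+1)$. Asymptotics are as $n\to\infty$. *)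

theory Defs
  imports Complex_Main "HOL-Library.Landau_Symbols"
begin

definition simple_graph :: "nat \<Rightarrow> nat set set \<Rightarrow> bool" where
  "simple_graph n E \<longleftrightarrow> E \<subseteq> {e. \<exists>u v. u \<noteq> v \<and> u \<in> {1..n} \<and> v \<in> {1..n} \<and> e = {u, v}}"

definition deg :: "nat set set \<Rightarrow> nat \<Rightarrow> nat" where
  "deg E v = card {e \<in> E. v \<in> e}"

text \<open>The support of the uniform random graph G(n,d): all simple graphs on [n]
  in which vertex i has degree d i.\<close>
definition graphs_deg :: "nat \<Rightarrow> (nat \<Rightarrow> nat) \<Rightarrow> nat set set set" where
  "graphs_deg n d = {E. simple_graph n E \<and> (\<forall>i\<in>{1..n}. deg E i = d i)}"

definition graphical :: "nat \<Rightarrow> (nat \<Rightarrow> nat) \<Rightarrow> bool" where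
  "graphical n d \<longleftrightarrow> graphs_deg n d \<noteq> {}"

definition prob_contains :: "nat \<Rightarrow> (nat \<Rightarrow> nat) \<Rightarrow> nat set set \<Rightarrow> real" where
  "prob_contains n d H =
     real (card {G \<in> graphs_deg n d. H \<subseteq> G}) / real (card (graphs_deg n d))"

definition nonincreasing_on :: "nat \<Rightarrow> (nat \<Rightarrow> nat) \<Rightarrow> bool" where
  "nonincreasing_on n d \<longleftrightarrow> (\<forall>i j. 1 \<le> i \<longrightarrow> i \<le> j \<longrightarrow> j \<le> n \<longrightarrow> d j \<le> d i)"

definition Mtot :: "nat \<Rightarrow> (nat \<Rightarrow> nat) \<Rightarrow> nat" where
  "Mtot n d = (\<Sum>i=1..n. d i)"

text \<open>Delta = d_1 (the sequence is assumed sorted nonincreasingly).\<close>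
definition Jd :: "nat \<Rightarrow> (nat \<Rightarrow> nat) \<Rightarrow> nat" where
  "Jd n d = (\<Sum>i=1..d 1. d i)"

definition Delta_set :: "(nat \<Rightarrow> nat) \<Rightarrow> nat set \<Rightarrow> nat" where
  "Delta_set d S = Max (insert 0 (d ` S))"

definition boundary :: "nat set set \<Rightarrow> nat set" where
  "boundary H = \<Union>H"

definition ffall :: "real \<Rightarrow> nat \<Rightarrow> real" where
  "ffall x k = (\<Prod>j<k. x - real j)"

end

theory Submission
  imports Defs
begin


definition oedges :: "nat set set \<Rightarrow> (nat \<times> nat) set" where
  "oedges E = {(x,y). {x,y} \<in> E}"

definition nbrs :: "nat set set \<Rightarrow> nat \<Rightarrow> nat set" where
  "nbrs E x = {y. {x,y} \<in> E}"

definition NK :: "nat \<Rightarrow> (nat \<Rightarrow> nat) \<Rightarrow> nat set set \<Rightarrow> nat" where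
  "NK n d K = card {G \<in> graphs_deg n d. K \<subseteq> G}"

lemma sg_edge:
  assumes "simple_graph n E" "{x,y} \<in> E"
  shows "x \<noteq> y \<and> x \<in> {1..n} \<and> y \<in> {1..n}"
proof -
  obtain u v where "u \<noteq> v" "u \<in> {1..n}" "v \<in> {1..n}" "{x,y} = {u,v}"
    using assms unfolding simple_graph_def by blast
  then show ?thesis by (auto simp: doubleton_eq_iff)
qed

lemma sg_edge2:
  assumes "simple_graph n E" "e \<in> E"
  shows "\<exists>u v. u \<noteq> v \<and> u \<in> {1..n} \<and> v \<in> {1..n} \<and> e = {u,v}"
  using assms unfolding simple_graph_def by blast

lemma sg_subset: "simple_graph n E \<Longrightarrow> F \<subseteq> E \<Longrightarrow> simple_graph n F"
  unfolding simple_graph_def by blast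

lemma sg_finite: "simple_graph n E \<Longrightarrow> finite E"
proof -
  assume "simple_graph n E"
  then have "E \<subseteq> Pow {1..n}" unfolding simple_graph_def by auto
  then show ?thesis by (rule finite_subset) simp
qed

lemma gd_finite: "finite (graphs_deg n d)"
proof -
  have "graphs_deg n d \<subseteq> Pow (Pow {1..n})"
    unfolding graphs_deg_def simple_graph_def by auto
  then show ?thesis by (rule finite_subset) simp
qed

lemma nbrs_sub: "simple_graph n E \<Longrightarrow> nbrs E x \<subseteq> {1..n}"
  unfolding nbrs_def using sg_edge by fastforce

lemma nbrs_finite: "simple_graph n E \<Longrightarrow> finite (nbrs E x)"
  by (rule finite_subset[OF nbrs_sub]) auto

lemma card_nbrs:
  assumes "simple_graph n E"
  shows "card (nbrs E x) = deg E x"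
proof -
  have "bij_betw (\<lambda>y. {x,y}) (nbrs E x) {e\<in>E. x \<in> e}"
  proof (rule bij_betwI')
    fix a b assume "a \<in> nbrs E x" "b \<in> nbrs E x"
    then have "x \<noteq> a" "x \<noteq> b" using sg_edge[OF assms] unfolding nbrs_def by auto
    then show "({x, a} = {x, b}) = (a = b)" by (auto simp: doubleton_eq_iff)
  next
    fix a assume "a \<in> nbrs E x" then show "{x,a} \<in> {e\<in>E. x \<in> e}" unfolding nbrs_def by auto
  next
    fix e assume "e \<in> {e\<in>E. x \<in> e}"
    then obtain u v where "e \<in> E" "x \<in> e" "e = {u,v}" using sg_edge2[OF assms] by blast
    then show "\<exists>y\<in>nbrs E x. e = {x, y}" unfolding nbrs_def by (auto simp: insert_commute)
  qed
  then show ?thesis unfolding deg_def by (simp add: bij_betw_same_card)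
qed

lemma oedges_fst:
  assumes "simple_graph n E" "finite S"
  shows "card {t\<in>oedges E. fst t \<in> S} = (\<Sum>a\<in>S. deg E a)"
proof -
  have "{t\<in>oedges E. fst t \<in> S} = Sigma S (nbrs E)"
    unfolding oedges_def nbrs_def by auto
  then show ?thesis using assms by (simp add: card_nbrs nbrs_finite)
qed

lemma oedges_sym: "(x,y) \<in> oedges E \<longleftrightarrow> (y,x) \<in> oedges E"
  unfolding oedges_def by (auto simp: insert_commute)

lemma oedges_snd:
  assumes "simple_graph n E" "finite S"
  shows "card {t\<in>oedges E. snd t \<in> S} = (\<Sum>a\<in>S. deg E a)"
proof -
  have "{t\<in>oedges E. snd t \<in> S} = prod.swap ` {t\<in>oedges E. fst t \<in> S}"
  proof (rule set_eqI)
    fix t :: "nat \<times> nat"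
    obtain a b where t: "t = (a,b)" by fastforce
    show "t \<in> {t\<in>oedges E. snd t \<in> S} \<longleftrightarrow> t \<in> prod.swap ` {t\<in>oedges E. fst t \<in> S}"
    proof
      assume "t \<in> {t\<in>oedges E. snd t \<in> S}"
      then have "(b,a) \<in> {t\<in>oedges E. fst t \<in> S}" using t oedges_sym by auto
      then show "t \<in> prod.swap ` {t\<in>oedges E. fst t \<in> S}" using t by force
    next
      assume "t \<in> prod.swap ` {t\<in>oedges E. fst t \<in> S}"
      then show "t \<in> {t\<in>oedges E. snd t \<in> S}" using t oedges_sym by auto
    qed
  qed
  moreover have "inj_on prod.swap {t\<in>oedges E. fst t \<in> S}" by (simp add: inj_on_def)
  ultimately have "card {t\<in>oedges E. snd t \<in> S} = card {t\<in>oedges E. fst t \<in> S}"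
    by (simp add: card_image)
  then show ?thesis using oedges_fst[OF assms] by simp
qed

lemma oedges_sub: "simple_graph n E \<Longrightarrow> oedges E \<subseteq> {1..n} \<times> {1..n}"
  unfolding oedges_def using sg_edge by fastforce

lemma card_oedges_deg:
  assumes "simple_graph n E"
  shows "card (oedges E) = (\<Sum>a\<in>{1..n}. deg E a)"
proof -
  have "oedges E = {t\<in>oedges E. fst t \<in> {1..n}}" using oedges_sub[OF assms] by auto
  then show ?thesis using oedges_fst[OF assms, of "{1..n}"] by simp
qed

lemma card_oedges:
  assumes "simple_graph n E"
  shows "card (oedges E) = 2 * card E"
proof -
  have fin: "finite E" using sg_finite[OF assms] .
  have "oedges E = (\<Union>e\<in>E. {(x,y). {x,y} = e})" unfolding oedges_def by auto
  also have "card \<dots> = (\<Sum>e\<in>E. card {(x,y). {x,y} = e})"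
  proof (rule card_UN_disjoint[OF fin])
    show "\<forall>i\<in>E. finite {(x, y). {x, y} = i}"
    proof
      fix e assume "e \<in> E"
      then obtain u v where "e = {u,v}" using sg_edge2[OF assms] by blast
      then have "{(x, y). {x, y} = e} \<subseteq> {u,v} \<times> {u,v}" by auto
      then show "finite {(x, y). {x, y} = e}" using finite_subset by blast
    qed
  qed auto
  also have "\<dots> = (\<Sum>e\<in>E. 2)"
  proof (rule sum.cong[OF refl])
    fix e assume "e \<in> E"
    then obtain u v where uv: "u \<noteq> v" "e = {u,v}" using sg_edge2[OF assms] by blast
    then have "{(x, y). {x, y} = e} = {(u,v),(v,u)}" by (auto simp: doubleton_eq_iff)
    then show "card {(x, y). {x, y} = e} = 2" using uv by auto
  qed
  finally show ?thesis by simp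
qed

lemma handshake:
  assumes "simple_graph n E"
  shows "(\<Sum>a\<in>{1..n}. deg E a) = 2 * card E"
  using card_oedges card_oedges_deg assms by metis



lemma topsum:
  assumes sorted: "nonincreasing_on n d"
  shows "S \<subseteq> {1..n} \<Longrightarrow> sum d S \<le> sum d {1..card S}"
proof (induction "card S" arbitrary: S)
  case 0
  then have "S = {}" using finite_subset[OF 0(2)] by auto
  then show ?case by simp
next
  case (Suc k)
  have fin: "finite S" using finite_subset[OF Suc(3)] by simp
  then have ne: "S \<noteq> {}" using Suc(2) by auto
  define m where "m = Max S"
  have mS: "m \<in> S" using Max_in[OF fin ne] m_def by simp
  have "S \<subseteq> {1..m}" using Suc(3) Max_ge[OF fin] m_def by auto
  then have "card S \<le> m" using card_mono[of "{1..m}" S] by simp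
  then have km: "Suc k \<le> m" using Suc(2) by simp
  have mn: "m \<le> n" using mS Suc(3) by auto
  have c: "k = card (S - {m})" using Suc(2) mS fin by simp
  have IH0: "sum d (S - {m}) \<le> sum d {1..card (S - {m})}" using Suc(1)[OF c] Suc(3) by auto
  have IH: "sum d (S - {m}) \<le> sum d {1..k}" using IH0 c by simp
  have "d m \<le> d (Suc k)" using sorted km mn unfolding nonincreasing_on_def by auto
  have "sum d S = d m + sum d (S - {m})" using sum.remove[OF fin mS] by simp
  also have "\<dots> \<le> d (Suc k) + sum d {1..k}" using IH \<open>d m \<le> d (Suc k)\<close> by simp
  also have "\<dots> = sum d {1..Suc k}" by simp
  finally show ?case using Suc(2) by simp
qed

lemma sum_le_J:
  assumes sorted: "nonincreasing_on n d" and S: "S \<subseteq> {1..n}" "card S \<le> d 1"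
  shows "sum d S \<le> Jd n d"
proof -
  have "sum d S \<le> sum d {1..card S}" using topsum[OF sorted S(1)] .
  also have "\<dots> \<le> sum d {1..d 1}" using S(2) by (intro sum_mono2) auto
  finally show ?thesis unfolding Jd_def .
qed

lemma d_le_d1: "nonincreasing_on n d \<Longrightarrow> i \<in> {1..n} \<Longrightarrow> d i \<le> d 1"
  unfolding nonincreasing_on_def by auto

lemma d1_le_J: "d 1 \<le> Jd n d"
proof (cases "d 1 = 0")
  case False
  then have "1 \<in> {1..d 1}" by auto
  then show ?thesis unfolding Jd_def using member_le_sum[of 1 "{1..d 1}" d] by simp
qed simp

lemma d_le_J: "nonincreasing_on n d \<Longrightarrow> i \<in> {1..n} \<Longrightarrow> d i \<le> Jd n d"
  using d_le_d1 d1_le_J le_trans by blast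

lemma gd_deg: "G \<in> graphs_deg n d \<Longrightarrow> i \<in> {1..n} \<Longrightarrow> deg G i = d i"
  unfolding graphs_deg_def by auto

lemma gd_sg: "G \<in> graphs_deg n d \<Longrightarrow> simple_graph n G"
  unfolding graphs_deg_def by auto

lemma deg_outside: "simple_graph n G \<Longrightarrow> i \<notin> {1..n} \<Longrightarrow> deg G i = 0"
proof -
  assume a: "simple_graph n G" "i \<notin> {1..n}"
  have "{e\<in>G. i \<in> e} = {}"
  proof (rule ccontr)
    assume "{e\<in>G. i \<in> e} \<noteq> {}"
    then obtain e where "e \<in> G" "i \<in> e" by auto
    then obtain u v where "u \<in> {1..n}" "v \<in> {1..n}" "e = {u,v}" using sg_edge2[OF a(1)] by blast
    then show False using a(2) \<open>i \<in> e\<close> by auto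
  qed
  then show ?thesis unfolding deg_def by (simp only: card.empty)
qed

lemma gd_M: "G \<in> graphs_deg n d \<Longrightarrow> Mtot n d = 2 * card G"
proof -
  assume a: "G \<in> graphs_deg n d"
  have "Mtot n d = (\<Sum>i=1..n. deg G i)" unfolding Mtot_def using gd_deg[OF a] by simp
  then show ?thesis using handshake[OF gd_sg[OF a]] by simp
qed

lemma nbrs_sum_le_J:
  assumes sorted: "nonincreasing_on n d" and G: "G \<in> graphs_deg n d"
  shows "sum d (nbrs G x) \<le> Jd n d"
proof (cases "x \<in> {1..n}")
  case True
  have "card (nbrs G x) = d x" using card_nbrs[OF gd_sg[OF G]] gd_deg[OF G True] by simp
  also have "\<dots> \<le> d 1" using d_le_d1[OF sorted True] .
  finally show ?thesis using sum_le_J[OF sorted nbrs_sub[OF gd_sg[OF G]]] by simp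
next
  case False
  then have "nbrs G x = {}" using nbrs_sub[OF gd_sg[OF G]] sg_edge[OF gd_sg[OF G]]
    unfolding nbrs_def by auto
  then show ?thesis by simp
qed

lemma sum_deg_eq_d:
  assumes G: "G \<in> graphs_deg n d" and S: "S \<subseteq> {1..n}"
  shows "(\<Sum>a\<in>S. deg G a) = sum d S"
  using gd_deg[OF G] S by (intro sum.cong) auto

lemma card_filter_eq_sum:
  "finite A \<Longrightarrow> card {e\<in>A. i \<in> e} = (\<Sum>e\<in>A. if i \<in> e then 1 else (0::nat))"
proof -
  assume f: "finite A"
  have "A \<inter> Collect ((\<in>) i) = {e\<in>A. i\<in>e}" by auto
  then show ?thesis using f by (simp add: sum.If_cases)
qed

lemma swap_valid:
  assumes G: "G \<in> graphs_deg n d" and R: "R \<subseteq> G" and A: "A \<inter> G = {}"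
    and sA: "simple_graph n A"
    and cnt: "\<And>i. (\<Sum>e\<in>R. if i \<in> e then 1 else (0::nat)) = (\<Sum>e\<in>A. if i \<in> e then 1 else (0::nat))"
  shows "(G - R) \<union> A \<in> graphs_deg n d"
proof -
  have sG: "simple_graph n G" using gd_sg[OF G] .
  have finG: "finite G" using sg_finite[OF sG] .
  have finA: "finite A" using sg_finite[OF sA] .
  have finR: "finite R" using finite_subset[OF R finG] .
  have sg: "simple_graph n ((G - R) \<union> A)" using sG sA unfolding simple_graph_def by blast
  have "deg ((G - R) \<union> A) i = d i" if i: "i \<in> {1..n}" for i
  proof -
    have e1: "{e \<in> (G - R) \<union> A. i \<in> e} = ({e\<in>G. i\<in>e} - {e\<in>R. i\<in>e}) \<union> {e\<in>A. i\<in>e}" by auto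
    have d1: "({e\<in>G. i\<in>e} - {e\<in>R. i\<in>e}) \<inter> {e\<in>A. i\<in>e} = {}" using A by auto
    have s1: "{e\<in>R. i\<in>e} \<subseteq> {e\<in>G. i\<in>e}" using R by auto
    have "card {e \<in> (G - R) \<union> A. i \<in> e} = card ({e\<in>G. i\<in>e} - {e\<in>R. i\<in>e}) + card {e\<in>A. i\<in>e}"
      unfolding e1 by (rule card_Un_disjoint) (use finG finA d1 in auto)
    also have "card ({e\<in>G. i\<in>e} - {e\<in>R. i\<in>e}) = card {e\<in>G. i\<in>e} - card {e\<in>R. i\<in>e}"
      by (rule card_Diff_subset) (use finR s1 in auto)
    finally have c1: "card {e \<in> (G - R) \<union> A. i \<in> e} = card {e\<in>G. i\<in>e} - card {e\<in>R. i\<in>e} + card {e\<in>A. i\<in>e}" .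
    have c2: "card {e\<in>R. i\<in>e} = card {e\<in>A. i\<in>e}"
      using cnt[of i] card_filter_eq_sum[OF finR] card_filter_eq_sum[OF finA] by simp
    have c3: "card {e\<in>R. i\<in>e} \<le> card {e\<in>G. i\<in>e}"
      by (rule card_mono) (use finG s1 in auto)
    have "card {e \<in> (G - R) \<union> A. i \<in> e} = card {e\<in>G. i\<in>e}"
      using c1 c2 c3 by simp
    then show ?thesis using gd_deg[OF G i] unfolding deg_def by simp
  qed
  then show ?thesis using sg unfolding graphs_deg_def by simp
qed

lemma sum2: "a \<noteq> b \<Longrightarrow> (\<Sum>e\<in>{a,b}. f e) = f a + (f b :: nat)"
  by simp

lemma sum3: "a \<noteq> b \<Longrightarrow> a \<noteq> c \<Longrightarrow> b \<noteq> c \<Longrightarrow> (\<Sum>e\<in>{a,b,c}. f e) = f a + f b + (f c :: nat)"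
  by simp

lemma cnt2:
  assumes "{u,v} \<noteq> {x,y}" "{u,x} \<noteq> {v,y}" "u \<noteq> v" "x \<noteq> y" "u \<noteq> x" "v \<noteq> y"
  shows "(\<Sum>e\<in>{{u,v},{x,y}}. if i\<in>e then 1 else (0::nat)) = (\<Sum>e\<in>{{u,x},{v,y}}. if i \<in> e then 1 else 0)"
  using assms by (cases "i=u"; cases "i=v"; cases "i=x"; cases "i=y") auto

lemma cnt3:
  assumes "a1 \<noteq> a2" "a1 \<noteq> a3" "a2 \<noteq> a3" "b1 \<noteq> b2" "b1 \<noteq> b3" "b2 \<noteq> b3"
   and "a1 = {u,x}" "a2 = {v,y}" "a3 = {w,z}" "b1 = {u,v}" "b2 = {x,w}" "b3 = {y,z}"
   and "u \<noteq> x" "v \<noteq> y" "w \<noteq> z" "u \<noteq> v" "x \<noteq> w" "y \<noteq> z"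
  shows "(\<Sum>e\<in>{a1,a2,a3}. if i\<in>e then 1 else (0::nat)) = (\<Sum>e\<in>{b1,b2,b3}. if i \<in> e then 1 else 0)"
proof -
  have "(\<Sum>e\<in>{a1,a2,a3}. if i\<in>e then 1 else (0::nat)) = (if i\<in>a1 then 1 else 0) + (if i\<in>a2 then 1 else 0) + (if i\<in>a3 then 1 else 0)"
    using assms(1-3) by simp
  moreover have "(\<Sum>e\<in>{b1,b2,b3}. if i\<in>e then 1 else (0::nat)) = (if i\<in>b1 then 1 else 0) + (if i\<in>b2 then 1 else 0) + (if i\<in>b3 then 1 else 0)"
    using assms(4-6) by simp
  moreover have "(if i\<in>{u,x} then 1 else (0::nat)) = (if i = u then 1 else 0) + (if i = x then 1 else 0)" using assms by auto
  moreover have "(if i\<in>{v,y} then 1 else (0::nat)) = (if i = v then 1 else 0) + (if i = y then 1 else 0)" using assms by auto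
  moreover have "(if i\<in>{w,z} then 1 else (0::nat)) = (if i = w then 1 else 0) + (if i = z then 1 else 0)" using assms by auto
  moreover have "(if i\<in>{u,v} then 1 else (0::nat)) = (if i = u then 1 else 0) + (if i = v then 1 else 0)" using assms by auto
  moreover have "(if i\<in>{x,w} then 1 else (0::nat)) = (if i = x then 1 else 0) + (if i = w then 1 else 0)" using assms by auto
  moreover have "(if i\<in>{y,z} then 1 else (0::nat)) = (if i = y then 1 else 0) + (if i = z then 1 else 0)" using assms by auto
  ultimately show ?thesis using assms(7-12) by simp
qed

lemma sg_pair: "a \<noteq> b \<Longrightarrow> a \<in> {1..n} \<Longrightarrow> b \<in> {1..n} \<Longrightarrow> simple_graph n {{a,b}}"
  unfolding simple_graph_def by blast

lemma sg_insert: "simple_graph n {e} \<Longrightarrow> simple_graph n E \<Longrightarrow> simple_graph n (insert e E)"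
  unfolding simple_graph_def by blast


lemma recover: "R \<subseteq> G \<Longrightarrow> A \<inter> G = {} \<Longrightarrow> (((G - R) \<union> A) - A) \<union> R = G"
  by blast

lemma sum_insert_le_nat: "finite N \<Longrightarrow> sum (f::nat\<Rightarrow>nat) (insert u N) \<le> f u + sum f N"
  by (cases "u \<in> N") (auto simp: insert_absorb)

lemma closed_nbhd_sum:
  assumes sorted: "nonincreasing_on n d" and G: "G \<in> graphs_deg n d" and u: "u \<in> {1..n}"
  shows "card {t \<in> oedges G. fst t \<in> insert u (nbrs G u)} \<le> 2 * Jd n d"
    and "card {t \<in> oedges G. snd t \<in> insert u (nbrs G u)} \<le> 2 * Jd n d"
proof -
  have sG: "simple_graph n G" using gd_sg[OF G] .
  have fin: "finite (insert u (nbrs G u))" using nbrs_finite[OF sG] by simp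
  have sub: "insert u (nbrs G u) \<subseteq> {1..n}" using nbrs_sub[OF sG] u by auto
  have "(\<Sum>a\<in>insert u (nbrs G u). deg G a) = sum d (insert u (nbrs G u))"
    using sum_deg_eq_d[OF G sub] .
  also have "\<dots> \<le> d u + sum d (nbrs G u)" using sum_insert_le_nat nbrs_finite[OF sG] by blast
  also have "\<dots> \<le> 2 * Jd n d" using d_le_J[OF sorted u] nbrs_sum_le_J[OF sorted G, of u] by linarith
  finally have *: "(\<Sum>a\<in>insert u (nbrs G u). deg G a) \<le> 2 * Jd n d" .
  show "card {t \<in> oedges G. fst t \<in> insert u (nbrs G u)} \<le> 2 * Jd n d"
    using * oedges_fst[OF sG fin] by simp
  show "card {t \<in> oedges G. snd t \<in> insert u (nbrs G u)} \<le> 2 * Jd n d"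
    using * oedges_snd[OF sG fin] by simp
qed

lemma card_oedges_diff:
  assumes G: "G \<in> graphs_deg n d" and KG: "K \<subseteq> G"
  shows "real (card (oedges (G - K))) = real (Mtot n d) - 2 * real (card K)"
proof -
  have sG: "simple_graph n G" using gd_sg[OF G] .
  have "simple_graph n (G - K)" using sg_subset[OF sG] by blast
  then have "card (oedges (G - K)) = 2 * card (G - K)" using card_oedges by blast
  also have "card (G - K) = card G - card K" using card_Diff_subset[OF _ KG] finite_subset[OF KG sg_finite[OF sG]] by simp
  finally have "card (oedges (G - K)) = 2 * (card G - card K)" .
  moreover have "card K \<le> card G" using card_mono[OF sg_finite[OF sG] KG] .
  moreover have "Mtot n d = 2 * card G" using gd_M[OF G] .
  ultimately show ?thesis by (simp add: of_nat_diff)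
qed

lemma card_nbrs_diff:
  assumes G: "G \<in> graphs_deg n d" and KG: "K \<subseteq> G" and u: "u \<in> {1..n}"
  shows "card (nbrs G u - nbrs K u) = d u - deg K u"
proof -
  have sG: "simple_graph n G" using gd_sg[OF G] .
  have sK: "simple_graph n K" using sg_subset[OF sG KG] .
  have "nbrs K u \<subseteq> nbrs G u" using KG unfolding nbrs_def by auto
  then have "card (nbrs G u - nbrs K u) = card (nbrs G u) - card (nbrs K u)"
    by (rule card_Diff_subset[OF nbrs_finite[OF sK]])
  then show ?thesis using card_nbrs[OF sG] card_nbrs[OF sK] gd_deg[OF G u] by simp
qed

lemma switch2:
  assumes sorted: "nonincreasing_on n d"
    and sK: "simple_graph n K" and uv: "u \<noteq> v" "u \<in> {1..n}" "v \<in> {1..n}" and pK: "{u,v} \<notin> K"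
  shows "real (card {G\<in>graphs_deg n d. insert {u,v} K \<subseteq> G}) * (real (Mtot n d) - 2 * real (card K) - 4 * real (Jd n d))
       \<le> real (card {G\<in>graphs_deg n d. K \<subseteq> G \<and> {u,v} \<notin> G}) * real (d u - deg K u) * real (d v - deg K v)"
proof -
  define p where "p = {u,v}"
  define A where "A = {G\<in>graphs_deg n d. insert p K \<subseteq> G}"
  define B where "B = {G\<in>graphs_deg n d. K \<subseteq> G \<and> p \<notin> G}"
  define F2 where "F2 G = {t \<in> oedges (G - K). fst t \<notin> insert u (nbrs G u) \<and> snd t \<notin> insert v (nbrs G v)}" for G
  define R2 where "R2 G = (nbrs G u - nbrs K u) \<times> (nbrs G v - nbrs K v)" for G
  define Rem where "Rem t = {p, {fst t, snd t}}" for t :: "nat \<times> nat"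
  define Ad where "Ad t = {{u, fst t}, {v, snd t}}" for t :: "nat \<times> nat"
  define sw where "sw G t = (G - Rem t) \<union> Ad t" for G t
  define \<Phi> where "\<Phi> = (\<lambda>(G,t). (sw G t, t))"
  have finA: "finite A" unfolding A_def using gd_finite by simp
  have finB: "finite B" unfolding B_def using gd_finite by simp
  have key: "Rem t \<subseteq> G \<and> Ad t \<inter> G = {} \<and> sw G t \<in> B \<and> t \<in> R2 (sw G t)"
    if G: "G \<in> A" and t: "t \<in> F2 G" for G t
  proof -
    obtain x y where txy: "t = (x,y)" by (cases t) auto
    have Ggd: "G \<in> graphs_deg n d" and pG: "p \<in> G" and KG: "K \<subseteq> G" using G unfolding A_def by auto
    have sG: "simple_graph n G" using gd_sg[OF Ggd] .
    have xyG: "{x,y} \<in> G" "{x,y} \<notin> K" and xN: "x \<notin> insert u (nbrs G u)" and yN: "y \<notin> insert v (nbrs G v)"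
      using t txy unfolding F2_def oedges_def by auto
    have xy: "x \<noteq> y" "x \<in> {1..n}" "y \<in> {1..n}" using sg_edge[OF sG xyG(1)] by auto
    have vNu: "v \<in> nbrs G u" and uNv: "u \<in> nbrs G v" using pG unfolding p_def nbrs_def by (auto simp: insert_commute)
    have xu: "x \<noteq> u" "x \<noteq> v" using xN vNu by auto
    have yv: "y \<noteq> v" "y \<noteq> u" using yN uNv by auto
    have uxG: "{u,x} \<notin> G" using xN unfolding nbrs_def by auto
    have vyG: "{v,y} \<notin> G" using yN unfolding nbrs_def by auto
    have R: "Rem t \<subseteq> G" unfolding Rem_def txy using pG xyG by auto
    have AG: "Ad t \<inter> G = {}" unfolding Ad_def txy using uxG vyG by auto
    have sA: "simple_graph n (Ad t)" unfolding Ad_def txy fst_conv snd_conv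
      by (rule sg_insert[OF sg_pair sg_pair]) (use uv xy xu yv in auto)
    have ne1: "p \<noteq> {x,y}" unfolding p_def using xu by (auto simp: doubleton_eq_iff)
    have ne2: "{u,x} \<noteq> {v,y}" using uv yv by (auto simp: doubleton_eq_iff)
    have cnt: "(\<Sum>e\<in>Rem t. if i \<in> e then 1 else (0::nat)) = (\<Sum>e\<in>Ad t. if i \<in> e then 1 else (0::nat))" for i
      unfolding Rem_def Ad_def txy fst_conv snd_conv p_def
      by (rule cnt2) (use ne1 ne2 uv xy xu yv in \<open>auto simp: p_def\<close>)
    have swgd: "sw G t \<in> graphs_deg n d" unfolding sw_def by (rule swap_valid[OF Ggd R AG sA cnt])
    have Ksw: "K \<subseteq> sw G t" unfolding sw_def Rem_def txy using KG pK xyG(2) unfolding p_def by auto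
    have "p \<noteq> {u,x}" "p \<noteq> {v,y}" unfolding p_def using xu yv uv by (auto simp: doubleton_eq_iff)
    then have psw: "p \<notin> sw G t" unfolding sw_def Rem_def Ad_def txy by simp
    have "x \<in> nbrs (sw G t) u" "y \<in> nbrs (sw G t) v" unfolding sw_def Ad_def txy nbrs_def by auto
    moreover have "x \<notin> nbrs K u" "y \<notin> nbrs K v" using uxG vyG KG unfolding nbrs_def by auto
    ultimately have "t \<in> R2 (sw G t)" unfolding R2_def txy by auto
    then show ?thesis using R AG swgd Ksw psw unfolding B_def by auto
  qed
  have inj: "inj_on \<Phi> (Sigma A F2)"
  proof (rule inj_onI)
    fix a b assume a: "a \<in> Sigma A F2" and b: "b \<in> Sigma A F2" and e: "\<Phi> a = \<Phi> b"
    obtain G1 t1 where a1: "a = (G1,t1)" by (cases a) auto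
    obtain G2 t2 where b1: "b = (G2,t2)" by (cases b) auto
    have tt: "t1 = t2" and ss: "sw G1 t1 = sw G2 t2" using e a1 b1 unfolding \<Phi>_def by auto
    have k1: "Rem t1 \<subseteq> G1" "Ad t1 \<inter> G1 = {}" using key a a1 by auto
    have k2: "Rem t2 \<subseteq> G2" "Ad t2 \<inter> G2 = {}" using key b b1 by auto
    have "G1 = ((sw G1 t1) - Ad t1) \<union> Rem t1" unfolding sw_def using recover[OF k1] by simp
    also have "\<dots> = ((sw G2 t2) - Ad t2) \<union> Rem t2" using ss tt by simp
    also have "\<dots> = G2" unfolding sw_def using recover[OF k2] by simp
    finally show "a = b" using a1 b1 tt by simp
  qed
  have img: "\<Phi> ` Sigma A F2 \<subseteq> Sigma B R2" unfolding \<Phi>_def using key by auto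
  have finR2: "finite (R2 G)" if "G \<in> B" for G
  proof -
    have "simple_graph n G" using that gd_sg unfolding B_def by auto
    then show ?thesis unfolding R2_def using nbrs_finite by auto
  qed
  have finF2: "finite (F2 G)" if "G \<in> A" for G
  proof -
    have sG: "simple_graph n G" using that gd_sg unfolding A_def by auto
    have "F2 G \<subseteq> oedges G" unfolding F2_def oedges_def by auto
    also have "\<dots> \<subseteq> {1..n} \<times> {1..n}" using oedges_sub[OF sG] .
    finally show ?thesis by (rule finite_subset) simp
  qed
  have F2low: "real (card (F2 G)) \<ge> real (Mtot n d) - 2 * real (card K) - 4 * real (Jd n d)" if G: "G \<in> A" for G
  proof -
    have Ggd: "G \<in> graphs_deg n d" and KG: "K \<subseteq> G" and pG: "p \<in> G" using G unfolding A_def by auto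
    have sG: "simple_graph n G" using gd_sg[OF Ggd] .
    define X1 where "X1 = {t \<in> oedges G. fst t \<in> insert u (nbrs G u)}"
    define X2 where "X2 = {t \<in> oedges G. snd t \<in> insert v (nbrs G v)}"
    have "oedges (G - K) \<subseteq> F2 G \<union> X1 \<union> X2" unfolding F2_def X1_def X2_def oedges_def by auto
    then have "card (oedges (G - K)) \<le> card (F2 G \<union> X1 \<union> X2)"
      using finF2[OF G] oedges_sub[OF sG] finite_subset[of _ "{1..n} \<times> {1..n}"]
      by (intro card_mono) (auto simp: X1_def X2_def)
    also have "\<dots> \<le> card (F2 G \<union> X1) + card X2" by (rule card_Un_le)
    also have "\<dots> \<le> card (F2 G) + card X1 + card X2" using card_Un_le[of "F2 G" X1] by simp
    finally have "card (oedges (G - K)) \<le> card (F2 G) + card X1 + card X2" .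
    moreover have "card X1 \<le> 2 * Jd n d" unfolding X1_def using closed_nbhd_sum(1)[OF sorted Ggd uv(2)] .
    moreover have "card X2 \<le> 2 * Jd n d" unfolding X2_def using closed_nbhd_sum(2)[OF sorted Ggd uv(3)] .
    ultimately have "real (card (oedges (G - K))) \<le> real (card (F2 G)) + 4 * real (Jd n d)" by linarith
    then show ?thesis using card_oedges_diff[OF Ggd KG] by linarith
  qed
  have c1: "card (Sigma A F2) \<le> card (Sigma B R2)"
    by (rule card_inj_on_le[OF inj img]) (use finB finR2 in auto)
  have c2: "card (Sigma B R2) = card B * ((d u - deg K u) * (d v - deg K v))"
  proof -
    have "card (Sigma B R2) = (\<Sum>G\<in>B. card (R2 G))" using finB finR2 by simp
    also have "\<dots> = (\<Sum>G\<in>B. (d u - deg K u) * (d v - deg K v))"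
    proof (rule sum.cong[OF refl])
      fix G assume "G \<in> B"
      then have G: "G \<in> graphs_deg n d" "K \<subseteq> G" unfolding B_def by auto
      show "card (R2 G) = (d u - deg K u) * (d v - deg K v)"
        unfolding R2_def card_cartesian_product using card_nbrs_diff[OF G uv(2)] card_nbrs_diff[OF G uv(3)] by simp
    qed
    finally show ?thesis by simp
  qed
  have "real (card A) * (real (Mtot n d) - 2 * real (card K) - 4 * real (Jd n d)) \<le> (\<Sum>G\<in>A. real (card (F2 G)))"
    using sum_mono[of A "\<lambda>_. real (Mtot n d) - 2 * real (card K) - 4 * real (Jd n d)" "\<lambda>G. real (card (F2 G))"] F2low
    by simp
  also have "(\<Sum>G\<in>A. real (card (F2 G))) = real (card (Sigma A F2))"
    using finA finF2 by simp
  also have "\<dots> \<le> real (card B * ((d u - deg K u) * (d v - deg K v)))"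
  proof -
    have "card (Sigma A F2) \<le> card B * ((d u - deg K u) * (d v - deg K v))" using c1 c2 by simp
    then show ?thesis by (simp only: of_nat_le_iff)
  qed
  finally show ?thesis unfolding A_def B_def p_def by (simp add: mult.assoc)
qed



lemma sum_insert4_le: "finite N \<Longrightarrow> sum (f::nat\<Rightarrow>nat) (insert a (insert b (insert c (insert e N)))) \<le> f a + f b + f c + f e + sum f N"
proof -
  assume N: "finite N"
  have "sum f (insert a (insert b (insert c (insert e N)))) \<le> f a + sum f (insert b (insert c (insert e N)))"
    by (rule sum_insert_le_nat) (simp add: N)
  also have "sum f (insert b (insert c (insert e N))) \<le> f b + sum f (insert c (insert e N))"
    by (rule sum_insert_le_nat) (simp add: N)
  also have "sum f (insert c (insert e N)) \<le> f c + sum f (insert e N)"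
    by (rule sum_insert_le_nat) (simp add: N)
  also have "sum f (insert e N) \<le> f e + sum f N"
    by (rule sum_insert_le_nat) (simp add: N)
  finally show ?thesis by simp
qed

lemma five_nbhd_sum:
  assumes sorted: "nonincreasing_on n d" and G: "G \<in> graphs_deg n d"
    and abce: "a \<in> {1..n}" "b \<in> {1..n}" "c \<in> {1..n}" "e \<in> {1..n}"
  shows "card {t \<in> oedges G. fst t \<in> insert a (insert b (insert c (insert e (nbrs G a))))} \<le> 5 * Jd n d"
    and "card {t \<in> oedges G. snd t \<in> insert a (insert b (insert c (insert e (nbrs G a))))} \<le> 5 * Jd n d"
proof -
  have sG: "simple_graph n G" using gd_sg[OF G] .
  define S where "S = insert a (insert b (insert c (insert e (nbrs G a))))"
  have fin: "finite S" unfolding S_def using nbrs_finite[OF sG] by simp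
  have sub: "S \<subseteq> {1..n}" unfolding S_def using nbrs_sub[OF sG] abce by auto
  have "(\<Sum>i\<in>S. deg G i) = sum d S" using sum_deg_eq_d[OF G sub] .
  also have "\<dots> \<le> d a + d b + d c + d e + sum d (nbrs G a)" unfolding S_def
    by (rule sum_insert4_le[OF nbrs_finite[OF sG]])
  also have "\<dots> \<le> 5 * Jd n d" using d_le_J[OF sorted abce(1)] d_le_J[OF sorted abce(2)]
      d_le_J[OF sorted abce(3)] d_le_J[OF sorted abce(4)] nbrs_sum_le_J[OF sorted G, of a] by linarith
  finally have *: "(\<Sum>i\<in>S. deg G i) \<le> 5 * Jd n d" .
  show "card {t \<in> oedges G. fst t \<in> insert a (insert b (insert c (insert e (nbrs G a))))} \<le> 5 * Jd n d"
    using * oedges_fst[OF sG fin] unfolding S_def by simp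
  show "card {t \<in> oedges G. snd t \<in> insert a (insert b (insert c (insert e (nbrs G a))))} \<le> 5 * Jd n d"
    using * oedges_snd[OF sG fin] unfolding S_def by simp
qed

lemma switch3:
  assumes sorted: "nonincreasing_on n d"
    and sK: "simple_graph n K" and uv: "u \<noteq> v" "u \<in> {1..n}" "v \<in> {1..n}" and pK: "{u,v} \<notin> K"
  shows "real (card {G\<in>graphs_deg n d. K \<subseteq> G \<and> {u,v} \<notin> G}) * (real (d u - deg K u) * real (d v - deg K v))
           * (real (Mtot n d) - 2 * real (card K) - 10 * real (Jd n d))
       \<le> real (card {G\<in>graphs_deg n d. insert {u,v} K \<subseteq> G}) * (real (Mtot n d) - 2 * real (card K))^2"
proof -
  define p where "p = {u,v}"
  define A where "A = {G\<in>graphs_deg n d. insert p K \<subseteq> G}"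
  define B where "B = {G\<in>graphs_deg n d. K \<subseteq> G \<and> p \<notin> G}"
  define W where "W G x y = {t \<in> oedges (G - K). fst t \<notin> insert x (insert u (insert v (insert y (nbrs G x))))
                                   \<and> snd t \<notin> insert y (insert u (insert v (insert x (nbrs G y))))}" for G x y
  define R3 where "R3 G = Sigma ((nbrs G u - nbrs K u) \<times> (nbrs G v - nbrs K v)) (\<lambda>xy. W G (fst xy) (snd xy))" for G
  define T where "T G = oedges (G - K) \<times> oedges (G - K)" for G
  define Rem where "Rem s = {{u, fst (fst s)}, {v, snd (fst s)}, {fst (snd s), snd (snd s)}}" for s :: "(nat \<times> nat) \<times> (nat \<times> nat)"
  define Ad where "Ad s = {p, {fst (fst s), fst (snd s)}, {snd (fst s), snd (snd s)}}" for s :: "(nat \<times> nat) \<times> (nat \<times> nat)"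
  define sw where "sw G s = (G - Rem s) \<union> Ad s" for G s
  define rr where "rr s = ((fst (fst s), fst (snd s)), (snd (fst s), snd (snd s)))" for s :: "(nat \<times> nat) \<times> (nat \<times> nat)"
  define \<Phi> where "\<Phi> = (\<lambda>(G,s). (sw G s, rr s))"
  have finA: "finite A" unfolding A_def using gd_finite by simp
  have finB: "finite B" unfolding B_def using gd_finite by simp
  have key: "Rem s \<subseteq> G \<and> Ad s \<inter> G = {} \<and> sw G s \<in> A \<and> rr s \<in> T (sw G s)"
    if G: "G \<in> B" and s: "s \<in> R3 G" for G s
  proof -
    obtain x y w z where sxy: "s = ((x,y),(w,z))" by (cases s) auto
    have Ggd: "G \<in> graphs_deg n d" and pG: "p \<notin> G" and KG: "K \<subseteq> G" using G unfolding B_def by auto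
    have sG: "simple_graph n G" using gd_sg[OF Ggd] .
    have xN: "{u,x} \<in> G" "{u,x} \<notin> K" and yN: "{v,y} \<in> G" "{v,y} \<notin> K"
      using s sxy unfolding R3_def nbrs_def by auto
    have wz: "{w,z} \<in> G" "{w,z} \<notin> K" "w \<notin> insert x (insert u (insert v (insert y (nbrs G x))))"
        "z \<notin> insert y (insert u (insert v (insert x (nbrs G y))))"
      using s sxy unfolding R3_def W_def oedges_def by auto
    have ex: "u \<noteq> x" "x \<in> {1..n}" using sg_edge[OF sG xN(1)] by auto
    have ey: "v \<noteq> y" "y \<in> {1..n}" using sg_edge[OF sG yN(1)] by auto
    have ew: "w \<noteq> z" "w \<in> {1..n}" "z \<in> {1..n}" using sg_edge[OF sG wz(1)] by auto
    have xv: "x \<noteq> v" using xN(1) pG unfolding p_def by auto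
    have yu: "y \<noteq> u" using yN(1) pG unfolding p_def by (auto simp: insert_commute)
    have wx: "w \<noteq> x" "w \<noteq> u" "w \<noteq> v" "w \<noteq> y" "{x,w} \<notin> G" using wz(3) unfolding nbrs_def by auto
    have zy: "z \<noteq> y" "z \<noteq> u" "z \<noteq> v" "z \<noteq> x" "{y,z} \<notin> G" using wz(4) unfolding nbrs_def by auto
    have R: "Rem s \<subseteq> G" unfolding Rem_def sxy using xN yN wz by simp
    have AG: "Ad s \<inter> G = {}" unfolding Ad_def sxy using pG wx zy by simp
    have sA: "simple_graph n (Ad s)" unfolding Ad_def sxy fst_conv snd_conv p_def
      by (rule sg_insert[OF sg_pair sg_insert[OF sg_pair sg_pair]]) (use uv ex ey ew wx zy in auto)
    have r1: "{u,x} \<noteq> {v,y}" "{u,x} \<noteq> {w,z}" "{v,y} \<noteq> {w,z}"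
      using uv yu wx by (auto simp: doubleton_eq_iff)
    have a1: "{u,v} \<noteq> {x,w}" "{u,v} \<noteq> {y,z}" "{x,w} \<noteq> {y,z}"
      using ex xv ey yu zy ew by (auto simp: doubleton_eq_iff)
    have cnt: "(\<Sum>e\<in>Rem s. if i \<in> e then 1 else (0::nat)) = (\<Sum>e\<in>Ad s. if i \<in> e then 1 else (0::nat))" for i
      unfolding Rem_def Ad_def sxy fst_conv snd_conv p_def
      by (rule cnt3[OF r1 a1 refl refl refl refl refl refl]) (use ex ey ew uv wx zy in auto)
    have swgd: "sw G s \<in> graphs_deg n d" unfolding sw_def by (rule swap_valid[OF Ggd R AG sA cnt])
    have Ksw: "insert p K \<subseteq> sw G s" unfolding sw_def Rem_def Ad_def sxy using KG xN(2) yN(2) wz(2) by auto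
    have "{x,w} \<in> sw G s - K" "{y,z} \<in> sw G s - K" unfolding sw_def Ad_def sxy
      using wx zy KG by auto
    then have "rr s \<in> T (sw G s)" unfolding rr_def T_def sxy oedges_def by simp
    then show ?thesis using R AG swgd Ksw unfolding A_def by auto
  qed
  have rr_inj: "rr s1 = rr s2 \<Longrightarrow> s1 = s2" for s1 s2
    unfolding rr_def by (cases s1; cases s2) auto
  have inj: "inj_on \<Phi> (Sigma B R3)"
  proof (rule inj_onI)
    fix a b assume a: "a \<in> Sigma B R3" and b: "b \<in> Sigma B R3" and e: "\<Phi> a = \<Phi> b"
    obtain G1 t1 where a1: "a = (G1,t1)" by (cases a) auto
    obtain G2 t2 where b1: "b = (G2,t2)" by (cases b) auto
    have tt0: "rr t1 = rr t2" and ss: "sw G1 t1 = sw G2 t2" using e a1 b1 unfolding \<Phi>_def by auto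
    have tt: "t1 = t2" using rr_inj[OF tt0] .
    have k1: "Rem t1 \<subseteq> G1" "Ad t1 \<inter> G1 = {}" using key a a1 by auto
    have k2: "Rem t2 \<subseteq> G2" "Ad t2 \<inter> G2 = {}" using key b b1 by auto
    have "G1 = ((sw G1 t1) - Ad t1) \<union> Rem t1" unfolding sw_def using recover[OF k1] by simp
    also have "\<dots> = ((sw G2 t2) - Ad t2) \<union> Rem t2" using ss tt by simp
    also have "\<dots> = G2" unfolding sw_def using recover[OF k2] by simp
    finally show "a = b" using a1 b1 tt by simp
  qed
  have img: "\<Phi> ` Sigma B R3 \<subseteq> Sigma A T" unfolding \<Phi>_def using key by auto
  have finT: "finite (T G)" if "G \<in> A" for G
  proof -
    have sG: "simple_graph n G" using that gd_sg unfolding A_def by auto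
    have "oedges (G - K) \<subseteq> oedges G" unfolding oedges_def by auto
    also have "\<dots> \<subseteq> {1..n} \<times> {1..n}" using oedges_sub[OF sG] .
    finally have "finite (oedges (G - K))" by (rule finite_subset) simp
    then show ?thesis unfolding T_def by simp
  qed
  have finW: "finite (W G x y)" if "G \<in> B" for G x y
  proof -
    have sG: "simple_graph n G" using that gd_sg unfolding B_def by auto
    have "W G x y \<subseteq> oedges G" unfolding W_def oedges_def by auto
    also have "\<dots> \<subseteq> {1..n} \<times> {1..n}" using oedges_sub[OF sG] .
    finally show ?thesis by (rule finite_subset) simp
  qed
  have finXY: "finite ((nbrs G u - nbrs K u) \<times> (nbrs G v - nbrs K v))" if "G \<in> B" for G
  proof -
    have "simple_graph n G" using that gd_sg unfolding B_def by auto
    then show ?thesis using nbrs_finite by auto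
  qed
  have finR3: "finite (R3 G)" if "G \<in> B" for G
    unfolding R3_def using finXY[OF that] finW[OF that] by auto
  have c1: "card (Sigma B R3) \<le> card (Sigma A T)"
    by (rule card_inj_on_le[OF inj img]) (use finA finT in auto)
  have cT: "real (card (Sigma A T)) = real (card A) * (real (Mtot n d) - 2 * real (card K))^2"
  proof -
    have "card (Sigma A T) = (\<Sum>G\<in>A. card (T G))" using finA finT by simp
    then have "real (card (Sigma A T)) = (\<Sum>G\<in>A. real (card (T G)))" by simp
    also have "\<dots> = (\<Sum>G\<in>A. (real (Mtot n d) - 2 * real (card K))^2)"
    proof (rule sum.cong[OF refl])
      fix G assume "G \<in> A"
      then have G: "G \<in> graphs_deg n d" "K \<subseteq> G" unfolding A_def by auto
      show "real (card (T G)) = (real (Mtot n d) - 2 * real (card K))^2"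
        unfolding T_def card_cartesian_product using card_oedges_diff[OF G] by (simp add: power2_eq_square)
    qed
    finally show ?thesis by simp
  qed
  have Wlow: "real (card (W G x y)) \<ge> real (Mtot n d) - 2 * real (card K) - 10 * real (Jd n d)"
    if G: "G \<in> B" and x: "x \<in> {1..n}" and y: "y \<in> {1..n}" for G x y
  proof -
    have Ggd: "G \<in> graphs_deg n d" and KG: "K \<subseteq> G" using G unfolding B_def by auto
    have sG: "simple_graph n G" using gd_sg[OF Ggd] .
    define Y1 where "Y1 = {t \<in> oedges G. fst t \<in> insert x (insert u (insert v (insert y (nbrs G x))))}"
    define Y2 where "Y2 = {t \<in> oedges G. snd t \<in> insert y (insert u (insert v (insert x (nbrs G y))))}"
    have "oedges (G - K) \<subseteq> W G x y \<union> Y1 \<union> Y2" unfolding W_def Y1_def Y2_def oedges_def by auto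
    have fo: "finite (oedges G)" by (rule finite_subset[OF oedges_sub[OF sG]]) simp
    have "finite Y1" "finite Y2" unfolding Y1_def Y2_def using fo by simp_all
    then have "finite (W G x y \<union> Y1 \<union> Y2)" using finW[OF G] by simp
    then have "card (oedges (G - K)) \<le> card (W G x y \<union> Y1 \<union> Y2)"
      using \<open>oedges (G - K) \<subseteq> W G x y \<union> Y1 \<union> Y2\<close> by (rule card_mono)
    also have "\<dots> \<le> card (W G x y \<union> Y1) + card Y2" by (rule card_Un_le)
    also have "\<dots> \<le> card (W G x y) + card Y1 + card Y2" using card_Un_le[of "W G x y" Y1] by simp
    finally have "card (oedges (G - K)) \<le> card (W G x y) + card Y1 + card Y2" .
    moreover have "card Y1 \<le> 5 * Jd n d" unfolding Y1_def using five_nbhd_sum(1)[OF sorted Ggd x uv(2) uv(3) y] .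
    moreover have "card Y2 \<le> 5 * Jd n d" unfolding Y2_def using five_nbhd_sum(2)[OF sorted Ggd y uv(2) uv(3) x] .
    ultimately have "real (card (oedges (G - K))) \<le> real (card (W G x y)) + 10 * real (Jd n d)" by linarith
    then show ?thesis using card_oedges_diff[OF Ggd KG] by linarith
  qed
  have R3low: "real (card (R3 G)) \<ge> (real (d u - deg K u) * real (d v - deg K v)) * (real (Mtot n d) - 2 * real (card K) - 10 * real (Jd n d))"
    if G: "G \<in> B" for G
  proof -
    have Ggd: "G \<in> graphs_deg n d" and KG: "K \<subseteq> G" using G unfolding B_def by auto
    have sG: "simple_graph n G" using gd_sg[OF Ggd] .
    define XY where "XY = (nbrs G u - nbrs K u) \<times> (nbrs G v - nbrs K v)"
    have cXY: "card XY = (d u - deg K u) * (d v - deg K v)"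
      unfolding XY_def card_cartesian_product using card_nbrs_diff[OF Ggd KG uv(2)] card_nbrs_diff[OF Ggd KG uv(3)] by simp
    have "card (R3 G) = (\<Sum>xy\<in>XY. card (W G (fst xy) (snd xy)))"
      unfolding R3_def XY_def using finXY[OF G] finW[OF G] by simp
    then have "real (card (R3 G)) = (\<Sum>xy\<in>XY. real (card (W G (fst xy) (snd xy))))" by simp
    also have "\<dots> \<ge> (\<Sum>xy\<in>XY. real (Mtot n d) - 2 * real (card K) - 10 * real (Jd n d))"
    proof (rule sum_mono)
      fix xy assume "xy \<in> XY"
      then have "fst xy \<in> nbrs G u" "snd xy \<in> nbrs G v" unfolding XY_def by auto
      then have "fst xy \<in> {1..n}" "snd xy \<in> {1..n}" using nbrs_sub[OF sG, of u] nbrs_sub[OF sG, of v] by auto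
      then show "real (Mtot n d) - 2 * real (card K) - 10 * real (Jd n d) \<le> real (card (W G (fst xy) (snd xy)))"
        using Wlow[OF G] by blast
    qed
    finally show ?thesis using cXY by simp
  qed
  have "real (card B) * (real (d u - deg K u) * real (d v - deg K v)) * (real (Mtot n d) - 2 * real (card K) - 10 * real (Jd n d))
        \<le> (\<Sum>G\<in>B. real (card (R3 G)))"
    using sum_mono[of B "\<lambda>_. (real (d u - deg K u) * real (d v - deg K v)) * (real (Mtot n d) - 2 * real (card K) - 10 * real (Jd n d))"
        "\<lambda>G. real (card (R3 G))"] R3low by (simp add: mult.assoc)
  also have "(\<Sum>G\<in>B. real (card (R3 G))) = real (card (Sigma B R3))"
    using finB finR3 by simp
  also have "\<dots> \<le> real (card (Sigma A T))" using c1 by (simp only: of_nat_le_iff)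
  also have "\<dots> = real (card A) * (real (Mtot n d) - 2 * real (card K))^2" using cT .
  finally show ?thesis unfolding A_def B_def p_def .
qed



definition FF :: "nat \<Rightarrow> (nat \<Rightarrow> nat) \<Rightarrow> nat set set \<Rightarrow> real" where
  "FF n d K = (\<Prod>i=1..n. ffall (real (d i)) (deg K i))"

lemma ffall_Suc: "ffall x (Suc k) = ffall x k * (x - real k)"
  unfolding ffall_def by (simp add: lessThan_Suc mult.commute)

lemma ffall_0: "ffall x 0 = 1"
  unfolding ffall_def by simp

lemma ffall_nonneg: "ffall (real m) k \<ge> 0"
proof (cases "k \<le> m")
  case True
  then show ?thesis unfolding ffall_def by (intro prod_nonneg) auto
next
  case False
  then have "m \<in> {..<k}" by auto
  then have "ffall (real m) k = 0" unfolding ffall_def by (intro prod_zero) auto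
  then show ?thesis by simp
qed

lemma ffall_zero: "k > m \<Longrightarrow> ffall (real m) k = 0"
proof -
  assume "k > m"
  then have "m \<in> {..<k}" by auto
  then show "ffall (real m) k = 0" unfolding ffall_def by (intro prod_zero) auto
qed

lemma FF_nonneg: "FF n d K \<ge> 0"
  unfolding FF_def by (intro prod_nonneg) (simp add: ffall_nonneg)

lemma FF_zero: "i \<in> {1..n} \<Longrightarrow> deg K i > d i \<Longrightarrow> FF n d K = 0"
  unfolding FF_def by (rule prod_zero) (auto intro!: bexI[of _ i] ffall_zero)

lemma FF_empty: "FF n d {} = 1"
  unfolding FF_def deg_def by (simp add: ffall_0)

lemma deg_insert:
  assumes "finite K" "{u,v} \<notin> K"
  shows "deg (insert {u,v} K) i = deg K i + (if i = u \<or> i = v then 1 else 0)"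
proof -
  have "{e \<in> insert {u,v} K. i \<in> e} = (if i = u \<or> i = v then insert {u,v} {e\<in>K. i \<in> e} else {e\<in>K. i \<in> e})"
    by auto
  then show ?thesis unfolding deg_def using assms by auto
qed

lemma FF_insert:
  assumes fin: "finite K" and pK: "{u,v} \<notin> K" and uv: "u \<noteq> v" "u \<in> {1..n}" "v \<in> {1..n}"
  shows "FF n d (insert {u,v} K) = FF n d K * ((real (d u) - real (deg K u)) * (real (d v) - real (deg K v)))"
proof -
  define h where "h i = real (d i) - real (deg K i)" for i
  have eq: "ffall (real (d i)) (deg (insert {u,v} K) i)
        = ffall (real (d i)) (deg K i) * ((if i = u then h u else 1) * (if i = v then h v else 1))" for i
  proof (cases "i = u \<or> i = v")
    case True
    then have "deg (insert {u,v} K) i = Suc (deg K i)" using deg_insert[OF fin pK] by simp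
    then show ?thesis using True uv(1) unfolding h_def by (auto simp: ffall_Suc)
  next
    case False
    then show ?thesis using deg_insert[OF fin pK, of i] by simp
  qed
  have "FF n d (insert {u,v} K) = (\<Prod>i=1..n. ffall (real (d i)) (deg K i) * ((if i = u then h u else 1) * (if i = v then h v else 1)))"
    unfolding FF_def using eq by simp
  also have "\<dots> = FF n d K * ((\<Prod>i=1..n. (if i = u then h u else 1)) * (\<Prod>i=1..n. (if i = v then h v else 1)))"
    unfolding FF_def by (simp add: prod.distrib)
  also have "\<dots> = FF n d K * (h u * h v)" using uv by simp
  finally show ?thesis unfolding h_def .
qed

lemma NK_zero:
  assumes "simple_graph n K" "i \<in> {1..n}" "deg K i > d i"
  shows "NK n d K = 0"
proof -
  have "{G \<in> graphs_deg n d. K \<subseteq> G} = {}"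
  proof (rule ccontr)
    assume "{G \<in> graphs_deg n d. K \<subseteq> G} \<noteq> {}"
    then obtain G where G: "G \<in> graphs_deg n d" "K \<subseteq> G" by auto
    have "deg K i \<le> deg G i" unfolding deg_def
      by (rule card_mono) (use sg_finite[OF gd_sg[OF G(1)]] G(2) in auto)
    then show False using gd_deg[OF G(1) assms(2)] assms(3) by simp
  qed
  then show ?thesis unfolding NK_def by (simp only: card.empty)
qed

lemma NK_split:
  "NK n d K = card {G\<in>graphs_deg n d. insert p K \<subseteq> G} + card {G\<in>graphs_deg n d. K \<subseteq> G \<and> p \<notin> G}"
proof -
  have "{G \<in> graphs_deg n d. K \<subseteq> G} = {G\<in>graphs_deg n d. insert p K \<subseteq> G} \<union> {G\<in>graphs_deg n d. K \<subseteq> G \<and> p \<notin> G}"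
    by auto
  moreover have "finite {G\<in>graphs_deg n d. insert p K \<subseteq> G}" "finite {G\<in>graphs_deg n d. K \<subseteq> G \<and> p \<notin> G}"
    using gd_finite by simp_all
  ultimately show ?thesis unfolding NK_def by (simp add: card_Un_disjoint disjoint_iff)
qed

lemma NK_ins_def: "NK n d (insert p K) = card {G\<in>graphs_deg n d. insert p K \<subseteq> G}"
  unfolding NK_def ..

lemma upper_ind:
  assumes sorted: "nonincreasing_on n d"
  shows "finite K \<Longrightarrow> simple_graph n K \<Longrightarrow> real (Mtot n d) \<ge> 2 * real (card K) + 4 * real (Jd n d) \<Longrightarrow>
    real (NK n d K) * (\<Prod>i=1..card K. (real (Mtot n d) - 2 * real i + 2 - 4 * real (Jd n d)))
      \<le> real (NK n d {}) * FF n d K"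
proof (induction K rule: finite_induct)
  case empty
  then show ?case by (simp add: FF_empty)
next
  case (insert p K)
  define M where "M = real (Mtot n d)"
  define J where "J = real (Jd n d)"
  obtain u v where uv: "u \<noteq> v" "u \<in> {1..n}" "v \<in> {1..n}" "p = {u,v}"
    using sg_edge2[OF insert(4)] by blast
  have sK: "simple_graph n K" using sg_subset[OF insert(4)] by blast
  have cK: "card (insert p K) = Suc (card K)" using insert(1,2) by simp
  have Mb: "M \<ge> 2 * real (card K) + 2 + 4 * J" using insert(5) cK unfolding M_def J_def by simp
  have IH: "real (NK n d K) * (\<Prod>i=1..card K. (M - 2 * real i + 2 - 4 * J)) \<le> real (NK n d {}) * FF n d K"
    using insert(3)[OF sK] Mb unfolding M_def J_def by simp
  define P where "P = (\<Prod>i=1..card K. (M - 2 * real i + 2 - 4 * J))"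
  have Pnn: "P \<ge> 0" unfolding P_def by (intro prod_nonneg) (use Mb in auto)
  have Pins: "(\<Prod>i=1..card (insert p K). (M - 2 * real i + 2 - 4 * J)) = P * (M - 2 * real (card K) - 4 * J)"
    unfolding P_def cK by (simp add: algebra_simps)
  have FFnn: "FF n d (insert p K) \<ge> 0" by (rule FF_nonneg)
  show ?case
  proof (cases "deg K u \<le> d u \<and> deg K v \<le> d v")
    case False
    then have "NK n d (insert p K) = 0"
    proof (cases "deg K u \<le> d u")
      case True
      then have "deg K v > d v" using False by simp
      then have "deg (insert p K) v > d v" using deg_insert[OF insert(1)] insert(2) uv by simp
      then show ?thesis using NK_zero[OF insert(4) uv(3)] by simp
    next
      case False
      then have "deg (insert p K) u > d u" using deg_insert[OF insert(1)] insert(2) uv by simp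
      then show ?thesis using NK_zero[OF insert(4) uv(2)] by simp
    qed
    then show ?thesis using FFnn by simp
  next
    case True
    define a where "a = real (d u - deg K u)"
    define b where "b = real (d v - deg K v)"
    have ab: "a = real (d u) - real (deg K u)" "b = real (d v) - real (deg K v)" "a \<ge> 0" "b \<ge> 0"
      unfolding a_def b_def using True by (auto simp: of_nat_diff)
    have sw: "real (NK n d (insert p K)) * (M - 2 * real (card K) - 4 * J)
        \<le> real (card {G\<in>graphs_deg n d. K \<subseteq> G \<and> p \<notin> G}) * a * b"
      using switch2[OF sorted sK uv(1-3)] insert(2) uv(4) unfolding NK_ins_def M_def J_def a_def b_def by simp
    have "real (card {G\<in>graphs_deg n d. K \<subseteq> G \<and> p \<notin> G}) \<le> real (NK n d K)"
      using NK_split[of n d K p] by simp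
    then have sw2: "real (NK n d (insert p K)) * (M - 2 * real (card K) - 4 * J) \<le> real (NK n d K) * (a * b)"
      using sw ab(3,4) by (smt (verit) mult.assoc mult_right_mono zero_le_mult_iff)
    have "real (NK n d (insert p K)) * (\<Prod>i=1..card (insert p K). (M - 2 * real i + 2 - 4 * J))
        = (real (NK n d (insert p K)) * (M - 2 * real (card K) - 4 * J)) * P"
      unfolding Pins by simp
    also have "\<dots> \<le> (real (NK n d K) * (a * b)) * P" using sw2 Pnn by (rule mult_right_mono)
    also have "\<dots> = (real (NK n d K) * P) * (a * b)" by simp
    also have "\<dots> \<le> (real (NK n d {}) * FF n d K) * (a * b)"
      using IH ab(3,4) unfolding P_def by (intro mult_right_mono) auto
    also have "\<dots> = real (NK n d {}) * FF n d (insert p K)"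
      using FF_insert[OF insert(1) _ uv(1-3)] insert(2) uv(4) ab(1,2) by simp
    finally show ?thesis unfolding M_def J_def .
  qed
qed


lemma step_arith:
  fixes NA NB ab c X J :: real
  assumes sw: "NB * ab * (X - 10 * J) \<le> NA * X^2" and cb: "c * (ab / X + X / (X - 10 * J)) \<le> 1"
    and X: "X > 10 * J" "J \<ge> 0" and ab: "ab \<ge> 0" and c: "c \<ge> 0" and NA: "NA \<ge> 0" and NB: "NB \<ge> 0"
  shows "(NA + NB) * ab * c \<le> NA * X"
proof -
  have Xp: "X > 0" using X by simp
  have Yp: "X - 10 * J > 0" using X by simp
  have "NB * ab \<le> NA * X^2 / (X - 10 * J)" using sw Yp by (simp add: field_simps)
  then have "NB * ab * c \<le> NA * X^2 / (X - 10 * J) * c" using c by (rule mult_right_mono)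
  then have "(NA + NB) * ab * c \<le> NA * ab * c + NA * X^2 / (X - 10 * J) * c" by (simp add: algebra_simps)
  also have "\<dots> = NA * X * (c * (ab / X + X / (X - 10 * J)))"
    using Xp Yp by (simp add: field_simps power2_eq_square)
  also have "\<dots> \<le> NA * X * 1" using cb NA Xp by (intro mult_left_mono) auto
  finally show ?thesis by simp
qed

lemma Delta_set_ge: "finite S \<Longrightarrow> u \<in> S \<Longrightarrow> d u \<le> Delta_set d S"
  unfolding Delta_set_def by (rule Max_ge) auto

lemma lower_ind:
  assumes sorted: "nonincreasing_on n d"
    and sH: "simple_graph n H"
    and W: "real (Mtot n d) - 2 * real (card H) > 10 * real (Jd n d)"
    and cdef: "c = 1 / (real (Delta_set d (boundary H))^2 / (real (Mtot n d) - 2 * real (card H))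
                  + (real (Mtot n d) - 2 * real (card H)) / (real (Mtot n d) - 2 * real (card H) - 10 * real (Jd n d)))"
  shows "finite K \<Longrightarrow> K \<subseteq> H \<Longrightarrow>
    real (NK n d K) * (\<Prod>i=1..card K. (real (Mtot n d) - 2 * real i + 2))
      \<ge> real (NK n d {}) * FF n d K * c ^ card K"
proof (induction K rule: finite_induct)
  case empty
  then show ?case by (simp add: FF_empty)
next
  case (insert p K)
  define M where "M = real (Mtot n d)"
  define J where "J = real (Jd n d)"
  define Wv where "Wv = real (Mtot n d) - 2 * real (card H)"
  define s where "s = real (Delta_set d (boundary H))^2"
  have J0: "J \<ge> 0" unfolding J_def by simp
  have Wp: "Wv > 10 * J" using W unfolding Wv_def J_def .
  have Wpos: "Wv > 0" using Wp J0 by linarith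
  have s0: "s \<ge> 0" unfolding s_def by simp
  have cpos: "c \<ge> 0" unfolding cdef using Wp Wpos s0 by (simp add: Wv_def[symmetric] s_def[symmetric] J_def[symmetric])
  have c_eq: "c = 1 / (s / Wv + Wv / (Wv - 10 * J))" unfolding cdef s_def Wv_def J_def ..
  obtain u v where uv: "u \<noteq> v" "u \<in> {1..n}" "v \<in> {1..n}" "p = {u,v}"
    using sg_edge2[OF sH] insert(4) by blast
  have KH: "K \<subseteq> H" using insert(4) by simp
  have sK: "simple_graph n K" using sg_subset[OF sH KH] .
  have finH: "finite H" using sg_finite[OF sH] .
  have cK: "card (insert p K) = Suc (card K)" using insert(1,2) by simp
  have cKH: "card (insert p K) \<le> card H" using card_mono[OF finH insert(4)] .
  define X where "X = M - 2 * real (card K)"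
  have XW: "X \<ge> Wv + 2" unfolding X_def Wv_def M_def using cKH cK by simp
  have IH: "real (NK n d K) * (\<Prod>i=1..card K. (M - 2 * real i + 2)) \<ge> real (NK n d {}) * FF n d K * c ^ card K"
    using insert(3)[OF KH] unfolding M_def by simp
  define P where "P = (\<Prod>i=1..card K. (M - 2 * real i + 2))"
  have Pnn: "P \<ge> 0" unfolding P_def by (intro prod_nonneg) (use XW Wpos X_def cK cKH in auto)
  have Pins: "(\<Prod>i=1..card (insert p K). (M - 2 * real i + 2)) = P * X"
    unfolding P_def cK X_def by (simp add: algebra_simps)
  have RHSnn: "real (NK n d {}) * FF n d K * c ^ card K \<ge> 0"
    using FF_nonneg cpos by simp
  show ?case
  proof (cases "deg K u \<le> d u \<and> deg K v \<le> d v")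
    case False
    then have "FF n d K = 0" using FF_zero[OF uv(2), of d K] FF_zero[OF uv(3), of d K] by auto
    then have "FF n d (insert p K) = 0"
      using FF_insert[OF insert(1) _ uv(1-3), of d] insert(2) uv(4) by simp
    moreover have "P * X \<ge> 0" using Pnn XW Wpos by simp
    ultimately show ?thesis using Pins[unfolded M_def] by simp
  next
    case True
    define a where "a = real (d u - deg K u)"
    define b where "b = real (d v - deg K v)"
    have ab: "a = real (d u) - real (deg K u)" "b = real (d v) - real (deg K v)" "a \<ge> 0" "b \<ge> 0"
      unfolding a_def b_def using True by (auto simp: of_nat_diff)
    have uvH: "u \<in> boundary H" "v \<in> boundary H" unfolding boundary_def using insert(4) uv(4) by auto
    have finB: "finite (boundary H)" unfolding boundary_def using finH sg_edge2[OF sH] by auto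
    have "a \<le> real (Delta_set d (boundary H))" "b \<le> real (Delta_set d (boundary H))"
      unfolding a_def b_def using Delta_set_ge[OF finB uvH(1), of d] Delta_set_ge[OF finB uvH(2), of d] by auto
    then have abs: "a * b \<le> s" unfolding s_def power2_eq_square using ab(3,4) by (intro mult_mono) auto
    have sw: "real (card {G\<in>graphs_deg n d. K \<subseteq> G \<and> p \<notin> G}) * (a * b) * (X - 10 * J)
        \<le> real (NK n d (insert p K)) * X^2"
      using switch3[OF sorted sK uv(1-3)] insert(2) uv(4) unfolding NK_ins_def M_def J_def a_def b_def X_def by simp
    have XJ: "X > 10 * J" using XW Wp by simp
    have cb: "c * (a * b / X + X / (X - 10 * J)) \<le> 1"
    proof -
      have Xp: "X > 0" using XW Wpos by simp
      have t1: "a * b / X \<le> s / Wv"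
      proof -
        have "a * b / X \<le> s / X" using abs Xp by (simp add: divide_right_mono)
        also have "\<dots> \<le> s / Wv" using s0 Wpos XW by (intro divide_left_mono) auto
        finally show ?thesis .
      qed
      have t2: "X / (X - 10 * J) \<le> Wv / (Wv - 10 * J)"
      proof -
        have "X / (X - 10 * J) = 1 + 10 * J / (X - 10 * J)" using XJ by (simp add: field_simps)
        also have "\<dots> \<le> 1 + 10 * J / (Wv - 10 * J)" using J0 Wp XW by (simp add: divide_left_mono)
        also have "\<dots> = Wv / (Wv - 10 * J)" using Wp by (simp add: field_simps)
        finally show ?thesis .
      qed
      have pos: "s / Wv + Wv / (Wv - 10 * J) > 0" using s0 Wpos Wp by (simp add: add_nonneg_pos)
      have "c * (a * b / X + X / (X - 10 * J)) \<le> c * (s / Wv + Wv / (Wv - 10 * J))"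
        using t1 t2 cpos by (intro mult_left_mono) auto
      also have "\<dots> = 1" unfolding c_eq using pos by simp
      finally show ?thesis .
    qed
    have step: "(real (NK n d K)) * (a * b) * c \<le> real (NK n d (insert p K)) * X"
      using step_arith[OF sw cb XJ J0 _ cpos] ab(3,4) NK_split[of n d K p] NK_ins_def[of n d p K] by simp
    have "real (NK n d {}) * FF n d (insert p K) * c ^ card (insert p K)
        = (real (NK n d {}) * FF n d K * c ^ card K) * (a * b * c)"
      using FF_insert[OF insert(1) _ uv(1-3), of d] insert(2) uv(4) ab(1,2) cK by simp
    also have "\<dots> \<le> (real (NK n d K) * P) * (a * b * c)"
      using IH ab(3,4) cpos unfolding P_def by (intro mult_right_mono) auto
    also have "\<dots> = (real (NK n d K) * (a * b) * c) * P" by simp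
    also have "\<dots> \<le> (real (NK n d (insert p K)) * X) * P" using step Pnn by (rule mult_right_mono)
    also have "\<dots> = real (NK n d (insert p K)) * (\<Prod>i=1..card (insert p K). (M - 2 * real i + 2))"
      unfolding Pins by simp
    finally show ?thesis unfolding M_def .
  qed
qed



lemma prob_NK: "prob_contains n d H = real (NK n d H) / real (NK n d {})"
  unfolding prob_contains_def NK_def by simp

lemma NK0_pos: "graphical n d \<Longrightarrow> NK n d {} > 0"
  unfolding NK_def graphical_def using gd_finite by (simp add: card_gt_0_iff)

lemma ffall_pos: "k \<le> m \<Longrightarrow> ffall (real m) k > 0"
  unfolding ffall_def by (intro prod_pos) auto

lemma FF_zero_ex:
  assumes "FF n d H = 0" shows "\<exists>i\<in>{1..n}. deg H i > d i"
proof (rule ccontr)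
  assume "\<not> ?thesis"
  then have "\<forall>i\<in>{1..n}. ffall (real (d i)) (deg H i) > 0" using ffall_pos by (simp add: not_less)
  then have "FF n d H > 0" unfolding FF_def by (intro prod_pos) auto
  then show False using assms by simp
qed

lemma det1:
  assumes sH: "simple_graph n H" and F: "FF n d H = 0"
  shows "prob_contains n d H = 0"
proof -
  obtain i where "i \<in> {1..n}" "deg H i > d i" using FF_zero_ex[OF F] by blast
  then have "NK n d H = 0" using NK_zero[OF sH] by blast
  then show ?thesis unfolding prob_NK by simp
qed

lemma det2:
  assumes sH: "simple_graph n H" and F: "FF n d H > 0"
  shows "2 * card H \<le> Mtot n d"
proof -
  have "\<forall>i\<in>{1..n}. deg H i \<le> d i"
  proof
    fix i assume i: "i \<in> {1..n}"
    show "deg H i \<le> d i"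
    proof (rule ccontr)
      assume "\<not> deg H i \<le> d i"
      then have "FF n d H = 0" using FF_zero[OF i] by simp
      then show False using F by simp
    qed
  qed
  then have "(\<Sum>i=1..n. deg H i) \<le> (\<Sum>i=1..n. d i)" by (intro sum_mono) auto
  then show ?thesis using handshake[OF sH] unfolding Mtot_def by simp
qed

lemma det3:
  assumes sorted: "nonincreasing_on n d" and M: "Mtot n d > 0"
  shows "Jd n d > 0"
proof -
  obtain i where i: "i \<in> {1..n}" "d i > 0" using M unfolding Mtot_def
    by (metis not_gr_zero sum_nonneg_eq_0_iff finite_atLeastAtMost zero_le)
  have "d 1 > 0" using d_le_d1[OF sorted i(1)] i(2) by simp
  then show ?thesis using d1_le_J[of d n] by simp
qed

lemma det4:
  assumes G: "graphical n d"
  shows "prob_contains n d {} = 1"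
  unfolding prob_NK using NK0_pos[OF G] by simp

lemma det_upper:
  assumes G: "graphical n d" and sorted: "nonincreasing_on n d" and sH: "simple_graph n H"
    and W: "real (Mtot n d) - 2 * real (card H) - 4 * real (Jd n d) > 0"
  shows "prob_contains n d H \<le> FF n d H * (\<Prod>i=1..card H. (1 + 4 * real (Jd n d) / (real (Mtot n d) - 2 * real (card H) - 4 * real (Jd n d)))
            / (real (Mtot n d) - 2 * real i + 2))"
proof -
  define M where "M = real (Mtot n d)"
  define J where "J = real (Jd n d)"
  define e where "e = card H"
  define D where "D = M - 2 * real e - 4 * J"
  define eps where "eps = 4 * J / D"
  have Dp: "D > 0" using W unfolding D_def M_def J_def e_def .
  have J0: "J \<ge> 0" unfolding J_def by simp
  have eps0: "eps \<ge> 0" unfolding eps_def using Dp J0 by simp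
  have fin: "finite H" using sg_finite[OF sH] .
  have ind: "real (NK n d H) * (\<Prod>i=1..e. (M - 2 * real i + 2 - 4 * J)) \<le> real (NK n d {}) * FF n d H"
    using upper_ind[OF sorted fin sH] W unfolding M_def J_def e_def by simp
  have fpos: "M - 2 * real i + 2 - 4 * J \<ge> D + 2" if "i \<in> {1..e}" for i
    using that unfolding D_def by auto
  have Ppos: "(\<Prod>i=1..e. (M - 2 * real i + 2 - 4 * J)) > 0"
    using fpos Dp by (intro prod_pos) (smt (verit))
  have N0: "real (NK n d {}) > 0" using NK0_pos[OF G] by simp
  have "prob_contains n d H = real (NK n d H) / real (NK n d {})" by (rule prob_NK)
  also have "\<dots> \<le> FF n d H / (\<Prod>i=1..e. (M - 2 * real i + 2 - 4 * J))"
    using ind Ppos N0 by (simp add: field_simps)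
  also have "\<dots> = FF n d H * (\<Prod>i=1..e. 1 / (M - 2 * real i + 2 - 4 * J))"
    by (simp add: prod_dividef)
  also have "\<dots> \<le> FF n d H * (\<Prod>i=1..e. (1 + eps) / (M - 2 * real i + 2))"
  proof (intro mult_left_mono FF_nonneg prod_mono conjI)
    fix i assume i: "i \<in> {1..e}"
    have f1: "M - 2 * real i + 2 - 4 * J \<ge> D + 2" using fpos[OF i] .
    show "0 \<le> 1 / (M - 2 * real i + 2 - 4 * J)" using f1 Dp by simp
    have "M - 2 * real i + 2 \<le> (1 + eps) * (M - 2 * real i + 2 - 4 * J)"
    proof -
      have "eps * (M - 2 * real i + 2 - 4 * J) \<ge> eps * D" using f1 eps0 by (intro mult_left_mono) auto
      moreover have "eps * D = 4 * J" unfolding eps_def using Dp by simp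
      ultimately show ?thesis by (simp add: algebra_simps)
    qed
    moreover have p1: "M - 2 * real i + 2 > 0" using f1 Dp J0 by linarith
    moreover have p2: "M - 2 * real i + 2 - 4 * J > 0" using f1 Dp by linarith
    ultimately show "1 / (M - 2 * real i + 2 - 4 * J) \<le> (1 + eps) / (M - 2 * real i + 2)"
      by (simp add: divide_simps)
  qed
  finally show ?thesis unfolding eps_def D_def M_def J_def e_def .
qed

lemma det_lower:
  assumes G: "graphical n d" and sorted: "nonincreasing_on n d" and sH: "simple_graph n H"
    and W: "real (Mtot n d) - 2 * real (card H) > 10 * real (Jd n d)"
  shows "prob_contains n d H * (\<Prod>i=1..card H. (real (Mtot n d) - 2 * real i + 2))
     \<ge> FF n d H * (1 / (real (Delta_set d (boundary H))^2 / (real (Mtot n d) - 2 * real (card H))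
                  + (real (Mtot n d) - 2 * real (card H)) / (real (Mtot n d) - 2 * real (card H) - 10 * real (Jd n d)))) ^ card H"
proof -
  define c where "c = 1 / (real (Delta_set d (boundary H))^2 / (real (Mtot n d) - 2 * real (card H))
                  + (real (Mtot n d) - 2 * real (card H)) / (real (Mtot n d) - 2 * real (card H) - 10 * real (Jd n d)))"
  have fin: "finite H" using sg_finite[OF sH] .
  have ind: "real (NK n d H) * (\<Prod>i=1..card H. (real (Mtot n d) - 2 * real i + 2)) \<ge> real (NK n d {}) * FF n d H * c ^ card H"
    using lower_ind[OF sorted sH W c_def fin] by simp
  have N0: "real (NK n d {}) > 0" using NK0_pos[OF G] by simp
  have "FF n d H * c ^ card H = (real (NK n d {}) * FF n d H * c ^ card H) / real (NK n d {})"
    using N0 by simp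
  also have "\<dots> \<le> (real (NK n d H) * (\<Prod>i=1..card H. (real (Mtot n d) - 2 * real i + 2))) / real (NK n d {})"
    using ind N0 by (intro divide_right_mono) auto
  also have "\<dots> = prob_contains n d H * (\<Prod>i=1..card H. (real (Mtot n d) - 2 * real i + 2))"
    unfolding prob_NK by simp
  finally show ?thesis unfolding c_def .
qed



lemma tends0:
  fixes f :: "nat \<Rightarrow> real"
  assumes "\<And>r. r > 0 \<Longrightarrow> eventually (\<lambda>n. \<bar>f n\<bar> < r) sequentially"
  shows "f \<longlonglongrightarrow> 0"
  unfolding tendsto_iff dist_real_def using assms by simp

lemma eps1_lim:
  fixes J W :: "nat \<Rightarrow> real"
  assumes J0: "\<And>n. J n \<ge> 0" and oJ: "\<And>c. c > 0 \<Longrightarrow> eventually (\<lambda>n. J n \<le> c * \<bar>W n\<bar>) sequentially"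
  shows "(\<lambda>n. if W n - 4 * J n > 0 then 4 * J n / (W n - 4 * J n) else 0) \<longlonglongrightarrow> 0"
proof (rule tends0)
  fix r :: real assume r: "r > 0"
  define c where "c = min (1/8) (r/16)"
  have c: "c > 0" "c \<le> 1/8" "c \<le> r/16" unfolding c_def using r by auto
  show "eventually (\<lambda>n. \<bar>if W n - 4 * J n > 0 then 4 * J n / (W n - 4 * J n) else 0\<bar> < r) sequentially"
    using oJ[OF c(1)]
  proof eventually_elim
    case (elim n)
    show ?case
    proof (cases "W n - 4 * J n > 0")
      case True
      have Wp: "W n > 0" using True J0[of n] by linarith
      then have JW: "J n \<le> c * W n" using elim by simp
      have "c * W n \<le> W n / 8" using c Wp by (simp add: mult_right_mono)
      then have D: "W n - 4 * J n \<ge> W n / 2" using JW by linarith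
      have "4 * J n \<le> 4 * c * W n" using JW by simp
      also have "\<dots> \<le> 8 * c * (W n - 4 * J n)" using D c(1) by (simp add: mult_left_mono)
      finally have "4 * J n / (W n - 4 * J n) \<le> 8 * c" using True by (simp add: divide_simps)
      moreover have "4 * J n / (W n - 4 * J n) \<ge> 0" using True J0[of n] by simp
      ultimately show ?thesis using True c r by simp
    next
      case False
      then show ?thesis using r by simp
    qed
  qed
qed

lemma g_lim:
  fixes J W s :: "nat \<Rightarrow> real"
  assumes J0: "\<And>n. J n \<ge> 0" and s0: "\<And>n. s n \<ge> 0"
    and oJ: "\<And>c. c > 0 \<Longrightarrow> eventually (\<lambda>n. J n \<le> c * \<bar>W n\<bar>) sequentially"
    and os: "\<And>c. c > 0 \<Longrightarrow> eventually (\<lambda>n. s n \<le> c * \<bar>W n\<bar>) sequentially"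
  shows "(\<lambda>n. if W n - 10 * J n > 0 then s n / W n + 10 * J n / (W n - 10 * J n) else 0) \<longlonglongrightarrow> 0"
proof (rule tends0)
  fix r :: real assume r: "r > 0"
  define c where "c = min (1/20) (r/42)"
  have c: "c > 0" "c \<le> 1/20" "c \<le> r/42" unfolding c_def using r by auto
  show "eventually (\<lambda>n. \<bar>if W n - 10 * J n > 0 then s n / W n + 10 * J n / (W n - 10 * J n) else 0\<bar> < r) sequentially"
    using oJ[OF c(1)] os[OF c(1)]
  proof eventually_elim
    case (elim n)
    show ?case
    proof (cases "W n - 10 * J n > 0")
      case True
      have Wp: "W n > 0" using True J0[of n] by linarith
      then have JW: "J n \<le> c * W n" and sW: "s n \<le> c * W n" using elim by simp_all
      have "c * W n \<le> W n / 20" using c Wp by (simp add: mult_right_mono)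
      then have D: "W n - 10 * J n \<ge> W n / 2" using JW by linarith
      have "10 * J n \<le> 10 * c * W n" using JW by simp
      also have "\<dots> \<le> 20 * c * (W n - 10 * J n)" using D c(1) by (simp add: mult_left_mono)
      finally have t2: "10 * J n / (W n - 10 * J n) \<le> 20 * c" using True by (simp add: divide_simps)
      have t1: "s n / W n \<le> c" using sW Wp by (simp add: divide_simps)
      have "s n / W n + 10 * J n / (W n - 10 * J n) \<ge> 0" using True J0[of n] s0[of n] Wp by simp
      then show ?thesis using True t1 t2 c r by simp
    next
      case False
      then show ?thesis using r by simp
    qed
  qed
qed

lemma prod_frac:
  fixes a :: real
  shows "(\<Prod>i=1..k. a / f i) = a ^ k / (\<Prod>i=1..k. f i)"
  by (simp add: prod_dividef)

theorem corollary1p5: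
  fixes d :: "nat \<Rightarrow> nat \<Rightarrow> nat" and H :: "nat \<Rightarrow> nat set set"
  assumes graphH: "\<And>n. simple_graph n (H n)"
    and graphical: "\<And>n. graphical n (d n)"
    and sorted: "\<And>n. nonincreasing_on n (d n)"
    and hypJ: "(\<lambda>n. real (Jd n (d n))) \<in> o(\<lambda>n. real (Mtot n (d n)) - 2 * real (card (H n)))"
  shows "(\<exists>\<epsilon>::nat \<Rightarrow> real. \<epsilon> \<longlonglongrightarrow> 0 \<and>
            (\<forall>\<^sub>F n in sequentially.
               prob_contains n (d n) (H n)
               \<le> (\<Prod>i=1..n. ffall (real (d n i)) (deg (H n) i)) *
                 (\<Prod>i=1..card (H n). (1 + \<epsilon> n) /
                     (real (Mtot n (d n)) - 2 * real i + 2))))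
       \<and> ((\<lambda>n. real (Delta_set (d n) (boundary (H n))) ^ 2)
              \<in> o(\<lambda>n. real (Mtot n (d n)) - 2 * real (card (H n)))
          \<longrightarrow> (\<exists>\<epsilon>::nat \<Rightarrow> real. \<epsilon> \<longlonglongrightarrow> 0 \<and>
                (\<forall>\<^sub>F n in sequentially.
                   prob_contains n (d n) (H n)
                   = (\<Prod>i=1..n. ffall (real (d n i)) (deg (H n) i)) *
                     (\<Prod>i=1..card (H n). (1 + \<epsilon> n) /
                         (real (Mtot n (d n)) - 2 * real i + 2)))))"
proof -
  define M where "M n = real (Mtot n (d n))" for n
  define J where "J n = real (Jd n (d n))" for n
  define e where "e n = card (H n)" for n
  define W where "W n = M n - 2 * real (e n)" for n
  define s where "s n = real (Delta_set (d n) (boundary (H n)))^2" for n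
  define F where "F n = FF n (d n) (H n)" for n
  define P where "P n = prob_contains n (d n) (H n)" for n
  define Pr where "Pr n = (\<Prod>i=1..e n. (M n - 2 * real i + 2))" for n
  define eps1 where "eps1 n = (if W n - 4 * J n > 0 then 4 * J n / (W n - 4 * J n) else 0)" for n
  have Fdef2: "(\<Prod>i=1..n. ffall (real (d n i)) (deg (H n) i)) = F n" for n unfolding F_def FF_def ..
  have J0: "J n \<ge> 0" for n unfolding J_def by simp
  have s0: "s n \<ge> 0" for n unfolding s_def by simp
  have F0: "F n \<ge> 0" for n unfolding F_def by (rule FF_nonneg)
  have oJ: "eventually (\<lambda>n. J n \<le> c * \<bar>W n\<bar>) sequentially" if "c > 0" for c
    using landau_o.smallD[OF hypJ that] unfolding J_def W_def M_def e_def by simp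
  have Fz: "P n = 0" if "F n = 0" for n
    using det1[OF graphH] that unfolding P_def F_def by blast
  have Wnn: "W n \<ge> 0" if "F n > 0" for n
    using det2[OF graphH, of n "d n"] that unfolding W_def M_def e_def F_def by simp
  have Jpos: "J n > 0" if "F n > 0" "e n \<ge> 1" for n
  proof -
    have "2 * card (H n) \<le> Mtot n (d n)" using det2[OF graphH, of n "d n"] that(1) unfolding F_def by simp
    then have "Mtot n (d n) > 0" using that(2) unfolding e_def by simp
    then show ?thesis using det3[OF sorted] unfolding J_def by simp
  qed
  have e0: "P n = 1 \<and> F n = 1" if "e n = 0" for n
  proof -
    have "H n = {}" using that sg_finite[OF graphH] unfolding e_def by simp
    then show ?thesis unfolding P_def F_def using det4[OF graphical] FF_empty by simp
  qed
  have up: "P n \<le> F n * ((1 + eps1 n) ^ e n / Pr n)" if "W n - 4 * J n > 0" for n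
  proof -
    have "P n \<le> F n * (\<Prod>i=1..e n. (1 + eps1 n) / (M n - 2 * real i + 2))"
      using det_upper[OF graphical sorted graphH, of n] that
      unfolding P_def F_def eps1_def W_def M_def J_def e_def by simp
    then show ?thesis unfolding Pr_def prod_frac by simp
  qed
  have ev8: "eventually (\<lambda>n. J n \<le> 1/8 * \<bar>W n\<bar>) sequentially" by (rule oJ) simp
  have ev20: "eventually (\<lambda>n. J n \<le> 1/20 * \<bar>W n\<bar>) sequentially" by (rule oJ) simp
  have eps1_0: "eps1 \<longlonglongrightarrow> 0" unfolding eps1_def by (rule eps1_lim[OF J0 oJ])
  have eps1_nn: "eps1 n \<ge> 0" for n unfolding eps1_def using J0[of n] by simp
  have part1: "\<exists>\<epsilon>::nat \<Rightarrow> real. \<epsilon> \<longlonglongrightarrow> 0 \<and>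
            (\<forall>\<^sub>F n in sequentially.
               prob_contains n (d n) (H n)
               \<le> (\<Prod>i=1..n. ffall (real (d n i)) (deg (H n) i)) *
                 (\<Prod>i=1..card (H n). (1 + \<epsilon> n) /
                     (real (Mtot n (d n)) - 2 * real i + 2)))"
  proof (intro exI conjI)
    show "eps1 \<longlonglongrightarrow> 0" by (rule eps1_0)
    show "\<forall>\<^sub>F n in sequentially.
               prob_contains n (d n) (H n)
               \<le> (\<Prod>i=1..n. ffall (real (d n i)) (deg (H n) i)) *
                 (\<Prod>i=1..card (H n). (1 + eps1 n) /
                     (real (Mtot n (d n)) - 2 * real i + 2))"
      using ev8
    proof eventually_elim
      case (elim n)
      have goal: "P n \<le> F n * ((1 + eps1 n) ^ e n / Pr n)"
      proof (cases "F n = 0")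
        case True
        then show ?thesis using Fz[OF True] by simp
      next
        case False
        then have Fp: "F n > 0" using F0[of n] by simp
        show ?thesis
        proof (cases "e n = 0")
          case True
          then show ?thesis using e0[OF True] unfolding Pr_def by simp
        next
          case False
          then have "J n > 0" using Jpos[OF Fp] by simp
          moreover have "W n \<ge> 0" using Wnn[OF Fp] .
          ultimately have "W n - 4 * J n > 0" using elim by simp
          then show ?thesis by (rule up)
        qed
      qed
      then show ?case unfolding Fdef2 using prod_frac[of "1 + eps1 n" "\<lambda>i. M n - 2 * real i + 2" "e n"]
        unfolding P_def Pr_def M_def e_def by simp
    qed
  qed
  have part2: "\<exists>\<epsilon>::nat \<Rightarrow> real. \<epsilon> \<longlonglongrightarrow> 0 \<and>
                (\<forall>\<^sub>F n in sequentially.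
                   prob_contains n (d n) (H n)
                   = (\<Prod>i=1..n. ffall (real (d n i)) (deg (H n) i)) *
                     (\<Prod>i=1..card (H n). (1 + \<epsilon> n) /
                         (real (Mtot n (d n)) - 2 * real i + 2)))"
    if hs: "(\<lambda>n. real (Delta_set (d n) (boundary (H n))) ^ 2)
              \<in> o(\<lambda>n. real (Mtot n (d n)) - 2 * real (card (H n)))"
  proof -
    have os: "eventually (\<lambda>n. s n \<le> c * \<bar>W n\<bar>) sequentially" if "c > 0" for c
      using landau_o.smallD[OF hs that] unfolding s_def W_def M_def e_def by simp
    define g where "g n = (if W n - 10 * J n > 0 then s n / W n + 10 * J n / (W n - 10 * J n) else 0)" for n
    define eps2 where "eps2 n = (if e n \<ge> 1 \<and> F n > 0 \<and> W n - 10 * J n > 0 then root (e n) (P n * Pr n / F n) - 1 else 0)" for n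
    have g0: "g \<longlonglongrightarrow> 0" unfolding g_def by (rule g_lim[OF J0 s0 oJ os])
    have g_nn: "g n \<ge> 0" for n
    proof (cases "W n - 10 * J n > 0")
      case True
      then have "W n > 0" using J0[of n] by linarith
      then show ?thesis unfolding g_def using True J0[of n] s0[of n] by simp
    qed (simp add: g_def)
    have Prpos: "Pr n > 0" if "W n > 0" for n
      unfolding Pr_def using that unfolding W_def by (intro prod_pos) auto
    have sand: "- g n \<le> eps2 n \<and> eps2 n \<le> eps1 n" for n
    proof (cases "e n \<ge> 1 \<and> F n > 0 \<and> W n - 10 * J n > 0")
      case False
      have "eps2 n = 0" unfolding eps2_def by (rule if_not_P[OF False])
      then show ?thesis using g_nn[of n] eps1_nn[of n] by simp
    next
      case True
      have en: "e n > 0" using True by simp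
      have Fp: "F n > 0" using True by simp
      have W10: "W n - 10 * J n > 0" using True by simp
      have Wp: "W n > 0" using W10 J0[of n] by linarith
      have Pp: "Pr n > 0" using Prpos[OF Wp] .
      define q where "q = P n * Pr n / F n"
      have "P n \<le> F n * ((1 + eps1 n) ^ e n / Pr n)" using up[of n] W10 J0[of n] by simp
      then have qu: "q \<le> (1 + eps1 n) ^ e n" unfolding q_def using Fp Pp by (simp add: field_simps)
      define c where "c = 1 / (s n / W n + W n / (W n - 10 * J n))"
      have low: "P n * Pr n \<ge> F n * c ^ e n"
        using det_lower[OF graphical sorted graphH, of n] W10
        unfolding P_def Pr_def F_def c_def s_def W_def M_def J_def e_def by simp
      have c0: "c \<ge> 0" unfolding c_def using Wp W10 s0[of n] by simp
      have ql: "c ^ e n \<le> q" unfolding q_def using low Fp by (simp add: field_simps)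
      have q0: "q \<ge> 0" using ql c0 by (meson order_trans zero_le_power)
      have r1: "root (e n) q \<le> 1 + eps1 n"
        using real_root_le_mono[OF en qu] real_root_power_cancel[OF en] eps1_nn[of n] by simp
      have r2: "c \<le> root (e n) q"
        using real_root_le_mono[OF en ql] real_root_power_cancel[OF en c0] by simp
      have cg: "c = 1 / (1 + g n)"
      proof -
        have "W n / (W n - 10 * J n) = 1 + 10 * J n / (W n - 10 * J n)" using W10 by (simp add: field_simps)
        then show ?thesis unfolding c_def g_def using W10 by simp
      qed
      have "1 / (1 + g n) \<ge> 1 - g n"
      proof -
        have "(1 - g n) * (1 + g n) \<le> 1" by (simp add: algebra_simps)
        then show ?thesis using g_nn[of n] by (simp add: divide_simps)
      qed
      then have "c \<ge> 1 - g n" using cg by simp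
      then show ?thesis unfolding eps2_def q_def[symmetric] using True r1 r2 by simp
    qed
    have eps2_0: "eps2 \<longlonglongrightarrow> 0"
    proof (rule tendsto_sandwich[of "\<lambda>n. - g n" eps2 sequentially eps1])
      show "\<forall>\<^sub>F n in sequentially. - g n \<le> eps2 n" using sand by simp
      show "\<forall>\<^sub>F n in sequentially. eps2 n \<le> eps1 n" using sand by simp
      show "(\<lambda>n. - g n) \<longlonglongrightarrow> 0" using tendsto_minus[OF g0] by simp
      show "eps1 \<longlonglongrightarrow> 0" by (rule eps1_0)
    qed
    show ?thesis
    proof (intro exI conjI)
      show "eps2 \<longlonglongrightarrow> 0" by (rule eps2_0)
      show "\<forall>\<^sub>F n in sequentially.
                   prob_contains n (d n) (H n)
                   = (\<Prod>i=1..n. ffall (real (d n i)) (deg (H n) i)) *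
                     (\<Prod>i=1..card (H n). (1 + eps2 n) /
                         (real (Mtot n (d n)) - 2 * real i + 2))"
        using ev20
      proof eventually_elim
        case (elim n)
        have goal: "P n = F n * ((1 + eps2 n) ^ e n / Pr n)"
        proof (cases "F n = 0")
          case True
          then show ?thesis using Fz[OF True] by simp
        next
          case False
          then have Fp: "F n > 0" using F0[of n] by simp
          show ?thesis
          proof (cases "e n = 0")
            case True
            then show ?thesis using e0[OF True] unfolding Pr_def by simp
          next
            case False
            then have en: "e n > 0" by simp
            have "J n > 0" using Jpos[OF Fp] False by simp
            moreover have "W n \<ge> 0" using Wnn[OF Fp] .
            ultimately have W10: "W n - 10 * J n > 0" using elim by simp
            have Wp: "W n > 0" using W10 J0[of n] by linarith
            have Pp: "Pr n > 0" using Prpos[OF Wp] .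
            have q0: "P n * Pr n / F n \<ge> 0" using Fp Pp unfolding P_def
              by (simp add: prob_contains_def)
            have "1 + eps2 n = root (e n) (P n * Pr n / F n)" unfolding eps2_def using en Fp W10 by simp
            then have "(1 + eps2 n) ^ e n = P n * Pr n / F n" using real_root_pow_pos2[OF en q0] by simp
            then show ?thesis using Fp Pp by simp
          qed
        qed
        then show ?case unfolding Fdef2 using prod_frac[of "1 + eps2 n" "\<lambda>i. M n - 2 * real i + 2" "e n"]
          unfolding P_def Pr_def M_def e_def by simp
      qed
    qed
  qed
  show ?thesis using part1 part2 by blast
qed

end
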